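(* Let $0<r<q-1$. Then \[\mathrm{ind}_{IZ}^G\chi_r\neq \mathrm{Ker}\,T_{-1,0}\oplus\mathrm{Ker}\,T_{1,2}.\]
   Context: $F$ is a finite extension of $\mathbb Q_p$ with ring of integers $\mathcal O$, uniformizer $\varpi$, residue field $\mathbb F_q$; $[x]$ is the multiplicative representative of $x\in\mathbb F_q$; $\bar a$ the reduction of $a\in\mathcal O$. $G=\mathrm{GL}_2(F)$, $K=\mathrm{GL}_2(\mathcal O)$, $Z$ the centre, $I$ the Iwahori subgroup of $K$ (lower-left entry in $\varpi\mathcal O$). $\chi_r:IZ\to\overline{\mathbb F}_p^\times$, $\begin{pmatrix} a&b\\ \varpi c&d\end{pmatrix}\mapsto\bar d^{\,r}$, $\mathrm{diag}(\varpi,\varpi)\mapsto1$; $\mathrm{ind}_{IZ}^G\chi_r$ is the compact induction, and $[g,1]$ denotes the element supported on $IZg^{-1}$ with value $1$ at $g^{-1}$. With $\beta=\begin{pmatrix}0&1\\ \varpi&0\end{pmatrix}$, $w=\begin{pmatrix}0&1\\1&0\end{pmatrix}$, $I_1=\{[\lambda]:\lambda\in\mathbb F_q\}$, $T_{-1,0},T_{1,2}$ are the $G$-endomorphisms of $\mathrm{ind}_{IZ}^G\chi_r$ with $T_{-1,0}[g,1]=\sum_{\lambda\in I_1}[g\begin{pmatrix}\varpi&\lambda\\0&1\end{pmatrix},1]$ and $T_{1,2}[g,1]=\sum_{\lambda\in I_1}[g\beta\begin{pmatrix}1&\lambda\\0&1\end{pmatrix}w,1]$. (It is known that $\mathrm{Ker}\,T_{-1,0}\cap\mathrm{Ker}\,T_{1,2}=0$.)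 *)

theory Defs
  imports "HOL-Computational_Algebra.Polynomial"
begin

datatype 'a m2 = M2 'a 'a 'a 'a  (* M2 a b c d = ((a,b),(c,d)) *)

fun m2_mult :: "'a::comm_ring_1 m2 \<Rightarrow> 'a m2 \<Rightarrow> 'a m2" where
  "m2_mult (M2 a b c d) (M2 a' b' c' d') =
     M2 (a*a' + b*c') (a*b' + b*d') (c*a' + d*c') (c*b' + d*d')"

fun m2_det :: "'a::comm_ring_1 m2 \<Rightarrow> 'a" where
  "m2_det (M2 a b c d) = a*d - b*c"

fun m2_smult :: "'a::comm_ring_1 \<Rightarrow> 'a m2 \<Rightarrow> 'a m2" where
  "m2_smult s (M2 a b c d) = M2 (s*a) (s*b) (s*c) (s*d)"

fun m2_entries :: "'a m2 \<Rightarrow> 'a set" where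
  "m2_entries (M2 a b c d) = {a, b, c, d}"

fun m2_lowleft :: "'a m2 \<Rightarrow> 'a" where
  "m2_lowleft (M2 a b c d) = c"

fun m2_lowright :: "'a m2 \<Rightarrow> 'a" where
  "m2_lowright (M2 a b c d) = d"

definition GL2 :: "'a::field m2 set" where
  "GL2 = {g. m2_det g \<noteq> 0}"

text \<open>Normalised discrete valuation v : F^x -> Z (surjective); the value at 0 is irrelevant.\<close>
definition discrete_valuation :: "('F::field \<Rightarrow> int) \<Rightarrow> bool" where
  "discrete_valuation v \<longleftrightarrow>
     (\<forall>x y. x \<noteq> 0 \<and> y \<noteq> 0 \<longrightarrow> v (x*y) = v x + v y) \<and>
     (\<forall>x y. x \<noteq> 0 \<and> y \<noteq> 0 \<and> x + y \<noteq> 0 \<longrightarrow> min (v x) (v y) \<le> v (x + y)) \<and>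
     (\<forall>n. \<exists>x. x \<noteq> 0 \<and> v x = n)"

definition valring :: "('F::field \<Rightarrow> int) \<Rightarrow> 'F set" where
  "valring v = {x. x = 0 \<or> 0 \<le> v x}"

definition maxideal :: "('F::field \<Rightarrow> int) \<Rightarrow> 'F set" where
  "maxideal v = {x. x = 0 \<or> 0 < v x}"

definition vcomplete :: "('F::field \<Rightarrow> int) \<Rightarrow> bool" where
  "vcomplete v \<longleftrightarrow>
     (\<forall>X :: nat \<Rightarrow> 'F.
        (\<forall>N::int. \<exists>M. \<forall>m\<ge>M. \<forall>n\<ge>M. X m = X n \<or> N \<le> v (X m - X n)) \<longrightarrow>
        (\<exists>L. \<forall>N::int. \<exists>M. \<forall>n\<ge>M. X n = L \<or> N \<le> v (X n - L)))"

definition residue_rel :: "('F::field \<Rightarrow> int) \<Rightarrow> ('F \<times> 'F) set" where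
  "residue_rel v = {(x, y). x \<in> valring v \<and> y \<in> valring v \<and> x - y \<in> maxideal v}"

text \<open>F is a p-adic field (finite extension of Q_p) with residue field of cardinality q:
  a complete discretely valued field of characteristic 0 whose residue field O/m is finite
  with q elements.\<close>
definition padic_field :: "('F::field \<Rightarrow> int) \<Rightarrow> nat \<Rightarrow> bool" where
  "padic_field v q \<longleftrightarrow>
     CHAR('F) = 0 \<and> discrete_valuation v \<and> vcomplete v \<and>
     finite (valring v // residue_rel v) \<and> card (valring v // residue_rel v) = q"

text \<open>Reduction O -> F_q followed by an embedding F_q -> coefficient field:
  a ring homomorphism on O whose kernel is the maximal ideal.\<close>
definition residue_map :: "('F::field \<Rightarrow> int) \<Rightarrow> ('F \<Rightarrow> 'k::field) \<Rightarrow> bool" where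
  "residue_map v \<iota> \<longleftrightarrow>
     \<iota> 1 = 1 \<and>
     (\<forall>x\<in>valring v. \<forall>y\<in>valring v. \<iota> (x + y) = \<iota> x + \<iota> y \<and> \<iota> (x * y) = \<iota> x * \<iota> y) \<and>
     (\<forall>x\<in>valring v. \<iota> x = 0 \<longleftrightarrow> x \<in> maxideal v)"

text \<open>The set I_1 of multiplicative (Teichmueller) representatives [lambda] of F_q in O,
  i.e. the roots of X^q - X in F.\<close>
definition teich :: "nat \<Rightarrow> 'F::field set" where
  "teich q = {x. x ^ q = x}"

definition Kmax :: "('F::field \<Rightarrow> int) \<Rightarrow> 'F m2 set" where
  "Kmax v = {g. m2_entries g \<subseteq> valring v \<and> m2_det g \<noteq> 0 \<and> v (m2_det g) = 0}"

definition Iwahori :: "('F::field \<Rightarrow> int) \<Rightarrow> 'F m2 set" where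
  "Iwahori v = {g \<in> Kmax v. m2_lowleft g \<in> maxideal v}"

text \<open>IZ (Z = scalar matrices F^x = varpi^Z O^x).\<close>
definition IZ :: "('F::field \<Rightarrow> int) \<Rightarrow> 'F \<Rightarrow> 'F m2 set" where
  "IZ v vpi = {m2_smult (vpi powi n) h | n h. h \<in> Iwahori v}"

text \<open>chi_r on IZ: write g = varpi^n h with h in I (n = v(det g)/2); chi_r(g) = (reduction of h_22)^r.\<close>
definition chi :: "('F::field \<Rightarrow> int) \<Rightarrow> 'F \<Rightarrow> ('F \<Rightarrow> 'k::field) \<Rightarrow> nat \<Rightarrow> 'F m2 \<Rightarrow> 'k" where
  "chi v vpi \<iota> r g = (\<iota> (vpi powi (- (v (m2_det g) div 2)) * m2_lowright g)) ^ r"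

definition ind_space :: "('F::field \<Rightarrow> int) \<Rightarrow> 'F \<Rightarrow> ('F \<Rightarrow> 'k::field) \<Rightarrow> nat \<Rightarrow> ('F m2 \<Rightarrow> 'k) set" where
  "ind_space v vpi \<iota> r =
     {f. (\<forall>g. g \<notin> GL2 \<longrightarrow> f g = 0) \<and>
         (\<forall>h\<in>IZ v vpi. \<forall>g\<in>GL2. f (m2_mult h g) = chi v vpi \<iota> r h * f g) \<and>
         (\<exists>S. finite S \<and> S \<subseteq> GL2 \<and>
              (\<forall>g\<in>GL2. f g \<noteq> 0 \<longrightarrow> (\<exists>s\<in>S. \<exists>h\<in>IZ v vpi. g = m2_mult h s)))}"

definition act :: "'F::field m2 \<Rightarrow> ('F m2 \<Rightarrow> 'k) \<Rightarrow> ('F m2 \<Rightarrow> 'k)" where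
  "act g f = (\<lambda>x. f (m2_mult x g))"

text \<open>[g,1]: supported on IZ g^{-1}, with value 1 at g^{-1} (value chi(h) at h g^{-1}).\<close>
definition bracket :: "('F::field \<Rightarrow> int) \<Rightarrow> 'F \<Rightarrow> ('F \<Rightarrow> 'k::field) \<Rightarrow> nat \<Rightarrow> 'F m2 \<Rightarrow> ('F m2 \<Rightarrow> 'k)" where
  "bracket v vpi \<iota> r g =
     (\<lambda>x. if x \<in> GL2 \<and> m2_mult x g \<in> IZ v vpi then chi v vpi \<iota> r (m2_mult x g) else 0)"

definition G_endo :: "('F::field m2 \<Rightarrow> 'k::field) set \<Rightarrow> (('F m2 \<Rightarrow> 'k) \<Rightarrow> ('F m2 \<Rightarrow> 'k)) \<Rightarrow> bool" where
  "G_endo V T \<longleftrightarrow>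
     (\<forall>f\<in>V. T f \<in> V) \<and>
     (\<forall>f\<in>V. \<forall>f'\<in>V. \<forall>a b. T (\<lambda>x. a * f x + b * f' x) = (\<lambda>x. a * T f x + b * T f' x)) \<and>
     (\<forall>g\<in>GL2. \<forall>f\<in>V. T (act g f) = act g (T f))"

definition beta_mat :: "'F::field \<Rightarrow> 'F m2" where
  "beta_mat vpi = M2 0 1 vpi 0"

definition w_mat :: "'F::field m2" where
  "w_mat = M2 0 1 1 0"

end

theory Submission
  imports Defs "HOL-Computational_Algebra.Polynomial"
begin

definition one2 :: "'a::comm_ring_1 m2" where "one2 = M2 1 0 0 1"

fun minv :: "'a::field m2 \<Rightarrow> 'a m2" where
  "minv (M2 a b c d) = M2 (d/(a*d-b*c)) (-b/(a*d-b*c)) (-c/(a*d-b*c)) (a/(a*d-b*c))"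

lemma m2_mult_assoc: "m2_mult (m2_mult x y) z = m2_mult x (m2_mult y z)"
  by (cases x; cases y; cases z) (simp add: algebra_simps)

lemma m2_det_mult: "m2_det (m2_mult x y) = m2_det x * m2_det y"
  by (cases x; cases y) (simp add: algebra_simps)

lemma one2_left[simp]: "m2_mult one2 x = x" and one2_right[simp]: "m2_mult x one2 = x"
  by (cases x; simp add: one2_def)+

lemma det_one2[simp]: "m2_det one2 = 1" by (simp add: one2_def)

lemma smult_mult_left: "m2_mult (m2_smult c x) y = m2_smult c (m2_mult x y)"
  by (cases x; cases y) (simp add: algebra_simps)
lemma smult_mult_right: "m2_mult x (m2_smult c y) = m2_smult c (m2_mult x y)"
  by (cases x; cases y) (simp add: algebra_simps)
lemma smult_smult: "m2_smult c (m2_smult d x) = m2_smult (c*d) x"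
  by (cases x) (simp add: algebra_simps)
lemma smult_one[simp]: "m2_smult 1 x = x" by (cases x) simp
lemma det_smult: "m2_det (m2_smult c x) = c^2 * m2_det x"
  by (cases x) (simp add: algebra_simps power2_eq_square)

lemma minv_alt: "minv (M2 a b c d) = m2_smult (inverse (a*d-b*c)) (M2 d (-b) (-c) a)"
  by (simp add: divide_inverse algebra_simps)

lemma minv_right: "m2_det g \<noteq> 0 \<Longrightarrow> m2_mult g (minv g) = one2"
proof (cases g)
  case (M2 a b c d)
  assume "m2_det g \<noteq> 0"
  then have D: "a*d-b*c \<noteq> 0" using M2 by simp
  have "m2_mult g (minv g) = m2_smult (inverse (a*d-b*c)) (M2 (a*d-b*c) 0 0 (a*d-b*c))"
    unfolding M2 minv_alt smult_mult_right by (simp add: algebra_simps)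
  also have "\<dots> = one2" using D by (simp add: one2_def)
  finally show ?thesis .
qed

lemma minv_left: "m2_det g \<noteq> 0 \<Longrightarrow> m2_mult (minv g) g = one2"
proof (cases g)
  case (M2 a b c d)
  assume "m2_det g \<noteq> 0"
  then have D: "a*d-b*c \<noteq> 0" using M2 by simp
  have "m2_mult (minv g) g = m2_smult (inverse (a*d-b*c)) (M2 (a*d-b*c) 0 0 (a*d-b*c))"
    unfolding M2 minv_alt smult_mult_left by (simp add: algebra_simps)
  also have "\<dots> = one2" using D by (simp add: one2_def)
  finally show ?thesis .
qed

lemma det_minv: "m2_det g \<noteq> 0 \<Longrightarrow> m2_det (minv g) = inverse (m2_det g)"
proof -
  assume a: "m2_det g \<noteq> 0"
  have "m2_det (m2_mult g (minv g)) = 1" using minv_right[OF a] by simp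
  then have "m2_det g * m2_det (minv g) = 1" by (simp add: m2_det_mult)
  then show ?thesis using a by (simp add: field_simps)
qed

lemma GL2_mult: "x \<in> GL2 \<Longrightarrow> y \<in> GL2 \<Longrightarrow> m2_mult x y \<in> GL2"
  by (simp add: GL2_def m2_det_mult)
lemma GL2_minv: "x \<in> GL2 \<Longrightarrow> minv x \<in> GL2"
  by (simp add: GL2_def det_minv)
lemma one2_GL2[simp]: "one2 \<in> GL2" by (simp add: GL2_def)

lemma minv_unique: "m2_mult x y = one2 \<Longrightarrow> m2_det x \<noteq> 0 \<Longrightarrow> y = minv x"
proof -
  assume xy: "m2_mult x y = one2" and d: "m2_det x \<noteq> 0"
  have "minv x = m2_mult (m2_mult (minv x) x) y" using xy by (simp add: m2_mult_assoc)
  also have "\<dots> = y" using minv_left[OF d] by simp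
  finally show ?thesis by simp
qed

lemma minv_mult: "m2_det x \<noteq> 0 \<Longrightarrow> m2_det y \<noteq> 0 \<Longrightarrow> minv (m2_mult x y) = m2_mult (minv y) (minv x)"
proof -
  assume dx: "m2_det x \<noteq> 0" and dy: "m2_det y \<noteq> 0"
  have "m2_mult (m2_mult x y) (m2_mult (minv y) (minv x)) = one2"
    by (simp add: m2_mult_assoc, simp add: m2_mult_assoc[symmetric] minv_right dy dx)
  then show ?thesis using dx dy by (intro minv_unique[symmetric]) (auto simp: m2_det_mult)
qed

locale vf =
  fixes v :: "'F::field \<Rightarrow> int" and vpi :: 'F
  assumes dval: "discrete_valuation v" and vpi0: "vpi \<noteq> 0" and vvpi: "v vpi = 1"
begin

lemma vpi_nz[simp]: "vpi \<noteq> 0" by (rule vpi0)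

lemma vmult: "x \<noteq> 0 \<Longrightarrow> y \<noteq> 0 \<Longrightarrow> v (x*y) = v x + v y"
  using dval unfolding discrete_valuation_def by blast

lemma vultra: "x \<noteq> 0 \<Longrightarrow> y \<noteq> 0 \<Longrightarrow> x + y \<noteq> 0 \<Longrightarrow> min (v x) (v y) \<le> v (x + y)"
  using dval unfolding discrete_valuation_def by blast

lemma v1[simp]: "v 1 = 0"
  using vmult[of 1 1] by simp

lemma vinv: "x \<noteq> 0 \<Longrightarrow> v (inverse x) = - v x"
  using vmult[of x "inverse x"] by simp

lemma vdiv: "x \<noteq> 0 \<Longrightarrow> y \<noteq> 0 \<Longrightarrow> v (x / y) = v x - v y"
  by (simp add: divide_inverse vmult vinv)

lemma vm1[simp]: "v (-1) = 0"
  using vmult[of "-1" "-1"] by simp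

lemma vneg[simp]: "v (- x) = v x"
proof (cases "x = 0")
  case False then show ?thesis using vmult[of "-1" x] by simp
qed simp

lemma vpow: "x \<noteq> 0 \<Longrightarrow> v (x ^ n) = int n * v x"
  by (induction n) (simp_all add: vmult algebra_simps)

lemma vpowi: "v (vpi powi n) = n"
proof (cases "n \<ge> 0")
  case True
  then show ?thesis by (simp add: power_int_def vpow vpi0 vvpi)
next
  case False
  then show ?thesis by (simp add: power_int_def vpow vpi0 vvpi power_inverse vinv)
qed

lemma powi_nz[simp]: "vpi powi n \<noteq> 0" using vpi0 by simp

definition dv :: "int \<Rightarrow> 'F \<Rightarrow> bool" where "dv n x \<longleftrightarrow> x = 0 \<or> n \<le> v x"

lemma dv0[simp]: "dv n 0" by (simp add: dv_def)

lemma dv_add: "dv n x \<Longrightarrow> dv n y \<Longrightarrow> dv n (x + y)"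
  unfolding dv_def using vultra[of x y] by (cases "x = 0"; cases "y = 0"; cases "x + y = 0") auto

lemma dv_neg[simp]: "dv n (- x) = dv n x" by (simp add: dv_def)

lemma dv_diff: "dv n x \<Longrightarrow> dv n y \<Longrightarrow> dv n (x - y)"
  using dv_add[of n x "-y"] by simp

lemma dv_mult: "dv n x \<Longrightarrow> dv m y \<Longrightarrow> dv (n + m) (x * y)"
  unfolding dv_def by (cases "x = 0"; cases "y = 0") (auto simp: vmult)

lemma dv_mono: "dv n x \<Longrightarrow> m \<le> n \<Longrightarrow> dv m x"
  unfolding dv_def by auto

lemma dv_mult0: "dv 0 x \<Longrightarrow> dv m y \<Longrightarrow> dv m (x * y)"
  using dv_mult[of 0 x m y] by simp

lemma dv_mult0': "dv m x \<Longrightarrow> dv 0 y \<Longrightarrow> dv m (x * y)"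
  using dv_mult[of m x 0 y] by simp

lemma dv_1[simp]: "dv 0 1" by (simp add: dv_def)

lemma dv_vpi[simp]: "dv 1 vpi" by (simp add: dv_def vvpi)

lemma dv_unit_div: "dv n x \<Longrightarrow> y \<noteq> 0 \<Longrightarrow> v y = 0 \<Longrightarrow> dv n (x / y)"
  unfolding dv_def by (cases "x = 0") (auto simp: vdiv)

lemma dv_div_vpi: "dv (n+1) x \<Longrightarrow> dv n (x / vpi)"
  unfolding dv_def by (cases "x = 0") (auto simp: vdiv vpi0 vvpi)

lemma valring_dv: "x \<in> valring v \<longleftrightarrow> dv 0 x" by (simp add: valring_def dv_def)
lemma maxideal_dv: "x \<in> maxideal v \<longleftrightarrow> dv 1 x" by (auto simp add: maxideal_def dv_def)

end


lemma minv_smult: "c \<noteq> 0 \<Longrightarrow> m2_det h \<noteq> 0 \<Longrightarrow> minv (m2_smult c h) = m2_smult (inverse c) (minv h)"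
proof -
  assume c: "c \<noteq> 0" and h: "m2_det h \<noteq> 0"
  have "m2_mult (m2_smult c h) (m2_smult (inverse c) (minv h)) = one2"
    using c by (simp add: smult_mult_left smult_mult_right smult_smult minv_right[OF h])
  then show ?thesis using c h by (intro minv_unique[symmetric]) (auto simp: det_smult)
qed

context vf
begin

definition ZK :: "'F m2 set" where
  "ZK = {m2_smult (vpi powi n) h | n h. h \<in> Kmax v}"

lemma Kmax_M2: "M2 a b c d \<in> Kmax v \<longleftrightarrow> dv 0 a \<and> dv 0 b \<and> dv 0 c \<and> dv 0 d \<and> a*d-b*c \<noteq> 0 \<and> v (a*d-b*c) = 0"
  by (auto simp: Kmax_def valring_dv)

lemma Iw_M2: "M2 a b c d \<in> Iwahori v \<longleftrightarrow> dv 0 a \<and> dv 0 b \<and> dv 1 c \<and> dv 0 d \<and> a*d-b*c \<noteq> 0 \<and> v (a*d-b*c) = 0"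
  by (auto simp: Iwahori_def Kmax_M2 maxideal_dv intro: dv_mono)

lemma Kmax_mult: "x \<in> Kmax v \<Longrightarrow> y \<in> Kmax v \<Longrightarrow> m2_mult x y \<in> Kmax v"
proof (cases x; cases y)
  fix a b c d a' b' c' d'
  assume x: "x \<in> Kmax v" "x = M2 a b c d" and y: "y \<in> Kmax v" "y = M2 a' b' c' d'"
  have dd: "(a*a'+b*c')*(c*b'+d*d') - (a*b'+b*d')*(c*a'+d*c') = (a*d-b*c) * (a'*d'-b'*c')"
    by (simp add: algebra_simps)
  show ?thesis using x(1) y(1) unfolding x(2) y(2) Kmax_M2 m2_mult.simps dd
    by (simp add: dv_add dv_mult0 vmult)
qed

lemma Iw_mult: "x \<in> Iwahori v \<Longrightarrow> y \<in> Iwahori v \<Longrightarrow> m2_mult x y \<in> Iwahori v"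
proof (cases x; cases y)
  fix a b c d a' b' c' d'
  assume x: "x \<in> Iwahori v" "x = M2 a b c d" and y: "y \<in> Iwahori v" "y = M2 a' b' c' d'"
  have "m2_mult x y \<in> Kmax v" using Kmax_mult x(1) y(1) by (simp add: Iwahori_def)
  moreover have "dv 1 (c*a' + d*c')"
  proof -
    have c1: "dv 1 c" "dv 0 a'" "dv 0 d" "dv 1 c'" using x y by (auto simp: Iw_M2)
    show ?thesis using dv_add[OF dv_mult0'[OF c1(1) c1(2)] dv_mult0[OF c1(3) c1(4)]] .
  qed
  ultimately show ?thesis using x y by (simp add: Iwahori_def maxideal_dv)
qed

lemma Kmax_minv: "x \<in> Kmax v \<Longrightarrow> minv x \<in> Kmax v"
proof (cases x)
  case (M2 a b c d)
  assume x: "x \<in> Kmax v"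
  then have D: "a*d-b*c \<noteq> 0" "v (a*d-b*c) = 0" using M2 by (auto simp: Kmax_M2)
  have "m2_det (minv x) = inverse (m2_det x)" by (rule det_minv) (use M2 D in simp)
  then have "m2_det (minv x) = inverse (a*d-b*c)" using M2 by simp
  then have "m2_det (minv x) \<noteq> 0 \<and> v (m2_det (minv x)) = 0" using D by (simp add: vinv)
  moreover have "dv 0 (d/(a*d-b*c)) \<and> dv 0 (-b/(a*d-b*c)) \<and> dv 0 (-c/(a*d-b*c)) \<and> dv 0 (a/(a*d-b*c))"
    using x M2 D by (auto simp: Kmax_M2 intro!: dv_unit_div)
  ultimately show ?thesis using M2 unfolding Kmax_def by (auto simp: valring_dv)
qed

lemma Iw_minv: "x \<in> Iwahori v \<Longrightarrow> minv x \<in> Iwahori v"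
proof (cases x)
  case (M2 a b c d)
  assume x: "x \<in> Iwahori v"
  then have D: "a*d-b*c \<noteq> 0" "v (a*d-b*c) = 0" using M2 by (auto simp: Iw_M2)
  have "minv x \<in> Kmax v" using x Kmax_minv by (auto simp: Iwahori_def)
  moreover have "dv 1 (-c/(a*d-b*c))" using x M2 D by (auto simp: Iw_M2 intro!: dv_unit_div)
  ultimately show ?thesis using M2 by (simp add: Iwahori_def maxideal_dv)
qed

lemma one2_Kmax: "one2 \<in> Kmax v" by (simp add: one2_def Kmax_M2)
lemma one2_Iw: "one2 \<in> Iwahori v" by (simp add: one2_def Iw_M2)
lemma Iw_Kmax: "x \<in> Iwahori v \<Longrightarrow> x \<in> Kmax v" by (simp add: Iwahori_def)
lemma Kmax_GL2: "x \<in> Kmax v \<Longrightarrow> x \<in> GL2" by (simp add: Kmax_def GL2_def)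

lemma powi_mult: "vpi powi n * vpi powi m = vpi powi (n + m)"
  by (simp add: power_int_add vpi0)

lemma powi_inv: "inverse (vpi powi n) = vpi powi (-n)"
  by (simp add: power_int_minus)

lemma smult_prod: "m2_mult (m2_smult (vpi powi n) x) (m2_smult (vpi powi m) y) = m2_smult (vpi powi (n+m)) (m2_mult x y)"
  by (simp add: smult_mult_left smult_mult_right smult_smult powi_mult ac_simps)

lemma IZ_mult: "x \<in> IZ v vpi \<Longrightarrow> y \<in> IZ v vpi \<Longrightarrow> m2_mult x y \<in> IZ v vpi"
  unfolding IZ_def using smult_prod Iw_mult by blast

lemma ZK_mult: "x \<in> ZK \<Longrightarrow> y \<in> ZK \<Longrightarrow> m2_mult x y \<in> ZK"
  unfolding ZK_def using smult_prod Kmax_mult by blast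

lemma IZ_minv: "x \<in> IZ v vpi \<Longrightarrow> minv x \<in> IZ v vpi"
proof -
  assume "x \<in> IZ v vpi"
  then obtain n h where x: "x = m2_smult (vpi powi n) h" "h \<in> Iwahori v" unfolding IZ_def by blast
  have "m2_det h \<noteq> 0" using x(2) by (simp add: Iwahori_def Kmax_def)
  then have "minv x = m2_smult (vpi powi (-n)) (minv h)" using x by (metis minv_smult powi_nz powi_inv)
  then show ?thesis using Iw_minv[OF x(2)] unfolding IZ_def by blast
qed

lemma ZK_minv: "x \<in> ZK \<Longrightarrow> minv x \<in> ZK"
proof -
  assume "x \<in> ZK"
  then obtain n h where x: "x = m2_smult (vpi powi n) h" "h \<in> Kmax v" unfolding ZK_def by blast
  have "m2_det h \<noteq> 0" using x(2) by (simp add: Kmax_def)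
  then have "minv x = m2_smult (vpi powi (-n)) (minv h)" using x by (metis minv_smult powi_nz powi_inv)
  then show ?thesis using Kmax_minv[OF x(2)] unfolding ZK_def by blast
qed

lemma one2_IZ: "one2 \<in> IZ v vpi"
  unfolding IZ_def using one2_Iw by (auto intro!: exI[of _ 0])

lemma one2_ZK: "one2 \<in> ZK"
  unfolding ZK_def using one2_Kmax by (auto intro!: exI[of _ 0])

lemma IZ_ZK: "x \<in> IZ v vpi \<Longrightarrow> x \<in> ZK"
  unfolding IZ_def ZK_def using Iw_Kmax by blast

lemma ZK_GL2: "x \<in> ZK \<Longrightarrow> x \<in> GL2"
  unfolding ZK_def using Kmax_GL2 vpi0 by (auto simp: GL2_def det_smult)

lemma IZ_GL2: "x \<in> IZ v vpi \<Longrightarrow> x \<in> GL2"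
  using IZ_ZK ZK_GL2 by blast

lemma Kmax_ZK: "x \<in> Kmax v \<Longrightarrow> x \<in> ZK"
  unfolding ZK_def by (auto intro!: exI[of _ 0])

lemma Iw_IZ: "x \<in> Iwahori v \<Longrightarrow> x \<in> IZ v vpi"
  unfolding IZ_def by (auto intro!: exI[of _ 0])

lemma scal_IZ: "m2_smult (vpi powi n) one2 \<in> IZ v vpi"
  unfolding IZ_def using one2_Iw by blast

end


lemma cancel_r1: "m2_det y \<noteq> 0 \<Longrightarrow> m2_mult (m2_mult x y) (minv y) = x"
  by (simp add: m2_mult_assoc minv_right)
lemma cancel_r2: "m2_det y \<noteq> 0 \<Longrightarrow> m2_mult (m2_mult x (minv y)) y = x"
  by (simp add: m2_mult_assoc minv_left)
lemma cancel_l1: "m2_det y \<noteq> 0 \<Longrightarrow> m2_mult (minv y) (m2_mult y x) = x"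
  by (simp add: m2_mult_assoc[symmetric] minv_left)
lemma cancel_l2: "m2_det y \<noteq> 0 \<Longrightarrow> m2_mult y (m2_mult (minv y) x) = x"
  by (simp add: m2_mult_assoc[symmetric] minv_right)

lemma GL2_det: "x \<in> GL2 \<Longrightarrow> m2_det x \<noteq> 0" by (simp add: GL2_def)

locale rep = vf v vpi for v :: "'F::field \<Rightarrow> int" and vpi :: 'F +
  fixes \<iota> :: "'F \<Rightarrow> 'k::field" and r :: nat
  assumes red: "residue_map v \<iota>"
begin

abbreviation "IZ' \<equiv> IZ v vpi"
abbreviation "ch \<equiv> chi v vpi \<iota> r"
abbreviation "br \<equiv> bracket v vpi \<iota> r"
abbreviation "VV \<equiv> ind_space v vpi \<iota> r"

lemma iota_add: "dv 0 x \<Longrightarrow> dv 0 y \<Longrightarrow> \<iota> (x + y) = \<iota> x + \<iota> y"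
  using red unfolding residue_map_def valring_dv[symmetric] by blast
lemma iota_mult: "dv 0 x \<Longrightarrow> dv 0 y \<Longrightarrow> \<iota> (x * y) = \<iota> x * \<iota> y"
  using red unfolding residue_map_def valring_dv[symmetric] by blast
lemma iota_zero: "dv 0 x \<Longrightarrow> \<iota> x = 0 \<longleftrightarrow> dv 1 x"
  using red unfolding residue_map_def valring_dv[symmetric] maxideal_dv[symmetric] by blast
lemma iota_one: "\<iota> 1 = 1"
  using red unfolding residue_map_def by blast

lemma IZ_elim: "h \<in> IZ' \<Longrightarrow> \<exists>n h0. h = m2_smult (vpi powi n) h0 \<and> h0 \<in> Iwahori v"
  unfolding IZ_def by blast

lemma v_det_smult: "m2_det h0 \<noteq> 0 \<Longrightarrow> v (m2_det (m2_smult (vpi powi n) h0)) = 2*n + v (m2_det h0)"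
proof -
  assume h: "m2_det h0 \<noteq> 0"
  have "v ((vpi powi n)^2) = 2*n" using vpow[OF powi_nz, of n 2] vpowi by simp
  then show ?thesis unfolding det_smult using h vmult[of "(vpi powi n)^2" "m2_det h0"] by simp
qed

lemma chi_IZ: "h0 \<in> Iwahori v \<Longrightarrow> ch (m2_smult (vpi powi n) h0) = (\<iota> (m2_lowright h0)) ^ r"
proof (cases h0)
  case (M2 a b c d)
  assume h: "h0 \<in> Iwahori v"
  then have D: "m2_det h0 \<noteq> 0" "v (m2_det h0) = 0" by (auto simp: Iwahori_def Kmax_def)
  have dv2: "v (m2_det (m2_smult (vpi powi n) h0)) div 2 = n"
    using v_det_smult[OF D(1)] D(2) by simp
  have e1: "vpi powi (-n) * vpi powi n = 1" by (simp add: powi_mult)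
  have e: "vpi powi (-n) * (vpi powi n * d) = d"
    by (simp only: mult.assoc[symmetric] e1 mult_1)
  have lr: "m2_lowright (m2_smult (vpi powi n) h0) = vpi powi n * d" using M2 by simp
  show ?thesis unfolding chi_def dv2 lr e using M2 by simp
qed

lemma Iw_unit: "h0 \<in> Iwahori v \<Longrightarrow> dv 0 (m2_lowright h0) \<and> \<not> dv 1 (m2_lowright h0)"
proof (cases h0)
  case (M2 a b c d)
  assume h: "h0 \<in> Iwahori v"
  then have hh: "dv 0 a" "dv 0 b" "dv 1 c" "dv 0 d" "a*d-b*c \<noteq> 0" "v (a*d-b*c) = 0" using M2 by (auto simp: Iw_M2)
  have "\<not> dv 1 d"
  proof
    assume "dv 1 d"
    then have "dv 1 (a*d - b*c)" using hh by (intro dv_diff) (auto intro: dv_mult0 dv_mult0')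
    then show False using hh by (simp add: dv_def)
  qed
  then show ?thesis using M2 hh by simp
qed

lemma chi_nz: "h \<in> IZ' \<Longrightarrow> ch h \<noteq> 0"
proof -
  assume "h \<in> IZ'"
  then obtain n h0 where h: "h = m2_smult (vpi powi n) h0" "h0 \<in> Iwahori v" using IZ_elim by blast
  show ?thesis using chi_IZ[OF h(2)] Iw_unit[OF h(2)] iota_zero h(1) by simp
qed

lemma chi_one: "ch one2 = 1"
  using chi_IZ[OF one2_Iw, of 0] by (simp add: one2_def iota_one)

lemma chi_mult: "h1 \<in> IZ' \<Longrightarrow> h2 \<in> IZ' \<Longrightarrow> ch (m2_mult h1 h2) = ch h1 * ch h2"
proof -
  assume "h1 \<in> IZ'" "h2 \<in> IZ'"
  then obtain n1 k1 n2 k2 where h: "h1 = m2_smult (vpi powi n1) k1" "k1 \<in> Iwahori v"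
    "h2 = m2_smult (vpi powi n2) k2" "k2 \<in> Iwahori v" using IZ_elim by metis
  obtain a1 b1 c1 d1 where k1: "k1 = M2 a1 b1 c1 d1" by (cases k1)
  obtain a2 b2 c2 d2 where k2: "k2 = M2 a2 b2 c2 d2" by (cases k2)
  have e: "dv 1 c1" "dv 0 b2" "dv 0 d1" "dv 0 d2" "dv 0 c1" using h k1 k2 by (auto simp: Iw_M2 intro: dv_mono)
  have L0: "ch (m2_mult h1 h2) = (\<iota> (m2_lowright (m2_mult k1 k2))) ^ r"
    unfolding h smult_prod by (rule chi_IZ[OF Iw_mult[OF h(2) h(4)]])
  have L1: "\<iota> (m2_lowright (m2_mult k1 k2)) = \<iota> (c1*b2) + \<iota> (d1*d2)"
    unfolding k1 k2 m2_mult.simps m2_lowright.simps by (rule iota_add) (use e in \<open>auto intro: dv_mult0\<close>)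
  have L2: "\<iota> (c1*b2) = 0" using iota_zero[of "c1*b2"] dv_mult0'[OF e(1) e(2)] dv_mult0'[OF e(5) e(2)] by simp
  have L3: "\<iota> (d1*d2) = \<iota> d1 * \<iota> d2" using e iota_mult by blast
  have L: "ch (m2_mult h1 h2) = (\<iota> d1 * \<iota> d2) ^ r" unfolding L0 L1 L2 L3 by simp
  have c1: "ch h1 = (\<iota> d1) ^ r" using chi_IZ[OF h(2), of n1] h(1) k1 by simp
  have c2: "ch h2 = (\<iota> d2) ^ r" using chi_IZ[OF h(4), of n2] h(3) k2 by simp
  show ?thesis unfolding L c1 c2 by (simp add: power_mult_distrib)
qed

lemma IZ_cancel: "h \<in> IZ' \<Longrightarrow> m2_mult h x \<in> IZ' \<Longrightarrow> x \<in> IZ'"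
proof -
  assume h: "h \<in> IZ'" "m2_mult h x \<in> IZ'"
  have "x = m2_mult (minv h) (m2_mult h x)" using cancel_l1 GL2_det IZ_GL2 h(1) by metis
  then show ?thesis using IZ_mult IZ_minv h by metis
qed

lemma br_in_V: "g \<in> GL2 \<Longrightarrow> br g \<in> VV"
proof -
  assume g: "g \<in> GL2"
  have A: "\<forall>x. x \<notin> GL2 \<longrightarrow> br g x = 0" by (simp add: bracket_def)
  have B: "\<forall>h\<in>IZ'. \<forall>y\<in>GL2. br g (m2_mult h y) = ch h * br g y"
  proof (intro ballI)
    fix h y :: "'F m2" assume h: "h \<in> IZ'" and y: "y \<in> GL2"
    have hy: "m2_mult h y \<in> GL2" using h y IZ_GL2 GL2_mult by blast
    show "br g (m2_mult h y) = ch h * br g y"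
    proof (cases "m2_mult y g \<in> IZ'")
      case True
      then show ?thesis using h y hy IZ_mult[OF h True] chi_mult[OF h True]
        by (simp add: bracket_def m2_mult_assoc)
    next
      case False
      then have "m2_mult (m2_mult h y) g \<notin> IZ'" using IZ_cancel[OF h] by (auto simp: m2_mult_assoc)
      then show ?thesis using False by (simp add: bracket_def)
    qed
  qed
  have C: "\<forall>y\<in>GL2. br g y \<noteq> 0 \<longrightarrow> (\<exists>s\<in>{minv g}. \<exists>h\<in>IZ'. y = m2_mult h s)"
  proof (intro ballI impI)
    fix y :: "'F m2" assume y: "y \<in> GL2" "br g y \<noteq> 0"
    then have "m2_mult y g \<in> IZ'" by (simp add: bracket_def split: if_splits)
    moreover have "y = m2_mult (m2_mult y g) (minv g)" using cancel_r1 GL2_det g by metis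
    ultimately show "\<exists>s\<in>{minv g}. \<exists>h\<in>IZ'. y = m2_mult h s" by blast
  qed
  have "finite {minv g} \<and> {minv g} \<subseteq> GL2" using GL2_minv g by simp
  then show ?thesis unfolding ind_space_def using A B C by (intro CollectI conjI exI[of _ "{minv g}"]) auto
qed

lemma br_val: "y \<in> GL2 \<Longrightarrow> m2_mult y g \<in> IZ' \<Longrightarrow> br g y = ch (m2_mult y g)"
  by (simp add: bracket_def)

lemma br_val0: "m2_mult y g \<notin> IZ' \<Longrightarrow> br g y = 0"
  by (simp add: bracket_def)

lemma br_self: "g \<in> GL2 \<Longrightarrow> br g (minv g) = 1"
  using br_val[of "minv g" g] GL2_minv minv_left GL2_det one2_IZ chi_one by metis

lemma V_lin: "f \<in> VV \<Longrightarrow> f' \<in> VV \<Longrightarrow> (\<lambda>x. a * f x + b * f' x) \<in> VV"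
proof -
  assume f: "f \<in> VV" and f': "f' \<in> VV"
  obtain S where S: "finite S" "S \<subseteq> GL2" "\<forall>g\<in>GL2. f g \<noteq> 0 \<longrightarrow> (\<exists>s\<in>S. \<exists>h\<in>IZ'. g = m2_mult h s)"
    using f unfolding ind_space_def by blast
  obtain S' where S': "finite S'" "S' \<subseteq> GL2" "\<forall>g\<in>GL2. f' g \<noteq> 0 \<longrightarrow> (\<exists>s\<in>S'. \<exists>h\<in>IZ'. g = m2_mult h s)"
    using f' unfolding ind_space_def by blast
  have C: "\<forall>g\<in>GL2. a * f g + b * f' g \<noteq> 0 \<longrightarrow> (\<exists>s\<in>S \<union> S'. \<exists>h\<in>IZ'. g = m2_mult h s)"
  proof (intro ballI impI)
    fix g :: "'F m2" assume g: "g \<in> GL2" "a * f g + b * f' g \<noteq> 0"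
    then have "f g \<noteq> 0 \<or> f' g \<noteq> 0" by auto
    then show "\<exists>s\<in>S \<union> S'. \<exists>h\<in>IZ'. g = m2_mult h s" using S(3) S'(3) g(1) by blast
  qed
  have B: "\<forall>h\<in>IZ'. \<forall>g\<in>GL2. a * f (m2_mult h g) + b * f' (m2_mult h g) = ch h * (a * f g + b * f' g)"
    using f f' unfolding ind_space_def by (simp add: algebra_simps)
  have A: "\<forall>g. g \<notin> GL2 \<longrightarrow> a * f g + b * f' g = 0" using f f' unfolding ind_space_def by simp
  have "finite (S \<union> S') \<and> S \<union> S' \<subseteq> GL2" using S S' by simp
  then show ?thesis unfolding ind_space_def using A B C by (intro CollectI conjI exI[of _ "S \<union> S'"]) auto
qed

lemma zero_V: "(\<lambda>_. 0) \<in> VV"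
  unfolding ind_space_def by auto

lemma V_zero: "f \<in> VV \<Longrightarrow> x \<notin> GL2 \<Longrightarrow> f x = 0"
  unfolding ind_space_def by blast

lemma V_equiv: "f \<in> VV \<Longrightarrow> h \<in> IZ' \<Longrightarrow> g \<in> GL2 \<Longrightarrow> f (m2_mult h g) = ch h * f g"
  unfolding ind_space_def by blast

end


context rep
begin

definition sameE :: "'F m2 \<Rightarrow> 'F m2 \<Rightarrow> bool" where
  "sameE s t \<longleftrightarrow> (\<exists>h\<in>IZ'. t = m2_mult s h)"

lemma sameE_sym: "sameE x b \<Longrightarrow> x \<in> GL2 \<Longrightarrow> sameE b x"
proof -
  assume "sameE x b" "x \<in> GL2"
  then obtain h where h: "h \<in> IZ'" "b = m2_mult x h" by (auto simp: sameE_def)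
  have "x = m2_mult b (minv h)" using h cancel_r1 GL2_det IZ_GL2 by metis
  then show ?thesis using IZ_minv h by (auto simp: sameE_def)
qed

lemma sameE_refl: "sameE x x"
  using one2_IZ by (auto simp: sameE_def intro!: bexI[of _ one2])

lemma reps: "finite A \<Longrightarrow> A \<subseteq> GL2 \<Longrightarrow> \<exists>B\<subseteq>A. (\<forall>a\<in>A. \<exists>b\<in>B. sameE b a) \<and> (\<forall>b\<in>B. \<forall>b'\<in>B. sameE b b' \<longrightarrow> b = b')"
proof (induction A rule: finite_induct)
  case empty then show ?case by auto
next
  case (insert x A)
  then obtain B where B: "B \<subseteq> A" "\<forall>a\<in>A. \<exists>b\<in>B. sameE b a" "\<forall>b\<in>B. \<forall>b'\<in>B. sameE b b' \<longrightarrow> b = b'" by auto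
  show ?case
  proof (cases "\<exists>b\<in>B. sameE b x")
    case True
    then show ?thesis using B by (intro exI[of _ B]) auto
  next
    case False
    have xG: "x \<in> GL2" using insert.prems by auto
    show ?thesis
    proof (intro exI[of _ "insert x B"] conjI ballI impI)
      show "insert x B \<subseteq> insert x A" using B by auto
    next
      fix a assume "a \<in> insert x A" then show "\<exists>b\<in>insert x B. sameE b a" using B sameE_refl by auto
    next
      fix b b' assume bb: "b \<in> insert x B" "b' \<in> insert x B" "sameE b b'"
      show "b = b'"
      proof (cases "b = x")
        case True
        then show ?thesis using bb False sameE_sym[OF _ xG] by auto
      next
        case bx: False
        then show ?thesis using bb False B by auto
      qed
    qed
  qed
qed

lemma decomp:
  assumes f: "f \<in> VV"
  shows "\<exists>S. finite S \<and> S \<subseteq> GL2 \<and> (\<forall>s\<in>S. \<forall>t\<in>S. sameE s t \<longrightarrow> s = t) \<and>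
           (\<forall>y. f y = (\<Sum>s\<in>S. f (minv s) * br s y))"
proof -
  obtain S0 where S0: "finite S0" "S0 \<subseteq> GL2" "\<forall>g\<in>GL2. f g \<noteq> 0 \<longrightarrow> (\<exists>s\<in>S0. \<exists>h\<in>IZ'. g = m2_mult h s)"
    using f unfolding ind_space_def by blast
  have A: "finite (minv ` S0)" "minv ` S0 \<subseteq> GL2" using S0 GL2_minv by auto
  obtain B where B: "B \<subseteq> minv ` S0" "\<forall>a\<in>minv ` S0. \<exists>b\<in>B. sameE b a" "\<forall>b\<in>B. \<forall>b'\<in>B. sameE b b' \<longrightarrow> b = b'"
    using reps[OF A] by blast
  have BG: "B \<subseteq> GL2" "finite B" using B(1) A finite_subset by auto
  have "f y = (\<Sum>s\<in>B. f (minv s) * br s y)" for y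
  proof (cases "y \<in> GL2")
    case False
    then show ?thesis using V_zero[OF f False] by (simp add: bracket_def)
  next
    case yG: True
    show ?thesis
    proof (cases "\<exists>s\<in>B. m2_mult y s \<in> IZ'")
      case True
      then obtain s where s: "s \<in> B" "m2_mult y s \<in> IZ'" by blast
      have sG: "s \<in> GL2" using s BG by auto
      have others: "br t y = 0" if t: "t \<in> B - {s}" for t
      proof (rule br_val0, rule notI)
        assume yt: "m2_mult y t \<in> IZ'"
        have tG: "t \<in> GL2" using t BG by auto
        have "m2_mult s (m2_mult (minv (m2_mult y s)) (m2_mult y t)) = t"
          using yG sG by (simp add: minv_mult GL2_det m2_mult_assoc cancel_l1 cancel_l2)
        moreover have "m2_mult (minv (m2_mult y s)) (m2_mult y t) \<in> IZ'" using IZ_mult IZ_minv s(2) yt by blast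
        ultimately have "sameE s t" unfolding sameE_def by metis
        then show False using B(3) s(1) t by auto
      qed
      have "(\<Sum>t\<in>B. f (minv t) * br t y) = f (minv s) * br s y + (\<Sum>t\<in>B - {s}. f (minv t) * br t y)"
        using BG(2) s(1) by (simp add: sum.remove)
      also have "(\<Sum>t\<in>B - {s}. f (minv t) * br t y) = 0" using others by simp
      also have "br s y = ch (m2_mult y s)" using br_val yG s(2) by blast
      finally have L: "(\<Sum>t\<in>B. f (minv t) * br t y) = f (minv s) * ch (m2_mult y s)" by simp
      have "y = m2_mult (m2_mult y s) (minv s)" using cancel_r1 GL2_det sG by metis
      then have "f y = ch (m2_mult y s) * f (minv s)" using V_equiv[OF f s(2) GL2_minv[OF sG]] by metis
      then show ?thesis using L by (simp add: mult.commute)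
    next
      case False
      then have z: "(\<Sum>t\<in>B. f (minv t) * br t y) = 0" using br_val0 by simp
      have "f y = 0"
      proof (rule ccontr)
        assume "f y \<noteq> 0"
        then obtain s0 h where sh: "s0 \<in> S0" "h \<in> IZ'" "y = m2_mult h s0" using S0(3) yG by blast
        then obtain b where b: "b \<in> B" "sameE b (minv s0)" using B(2) by blast
        then obtain h' where h': "h' \<in> IZ'" "minv s0 = m2_mult b h'" unfolding sameE_def by blast
        have s0G: "s0 \<in> GL2" using sh S0 by auto
        have "b = m2_mult (minv s0) (minv h')" using h' cancel_r1 GL2_det IZ_GL2 by metis
        then have "m2_mult y b = m2_mult h (minv h')" using sh s0G
          by (simp add: m2_mult_assoc cancel_l2 GL2_det)
        then have "m2_mult y b \<in> IZ'" using IZ_mult IZ_minv sh h' by metis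
        then show False using False b by blast
      qed
      then show ?thesis using z by simp
    qed
  qed
  then show ?thesis using BG B(3) by blast
qed

lemma G_endo_lin: "G_endo VV T \<Longrightarrow> f \<in> VV \<Longrightarrow> f' \<in> VV \<Longrightarrow>
    T (\<lambda>x. a * f x + b * f' x) = (\<lambda>x. a * T f x + b * T f' x)"
  unfolding G_endo_def by blast

lemma T_zero: "G_endo VV T \<Longrightarrow> T (\<lambda>_. 0) = (\<lambda>_. 0)"
  using G_endo_lin[OF _ zero_V zero_V, of T 0 0] by simp

lemma T_sum:
  assumes T: "G_endo VV T"
  shows "finite S \<Longrightarrow> S \<subseteq> GL2 \<Longrightarrow> (\<lambda>y. \<Sum>s\<in>S. c s * br s y) \<in> VV \<and>
           T (\<lambda>y. \<Sum>s\<in>S. c s * br s y) = (\<lambda>y. \<Sum>s\<in>S. c s * T (br s) y)"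
proof (induction S rule: finite_induct)
  case empty
  then show ?case using zero_V T_zero[OF T] by simp
next
  case (insert x S)
  then have IH: "(\<lambda>y. \<Sum>s\<in>S. c s * br s y) \<in> VV" "T (\<lambda>y. \<Sum>s\<in>S. c s * br s y) = (\<lambda>y. \<Sum>s\<in>S. c s * T (br s) y)"
    and xG: "x \<in> GL2" by auto
  have e: "(\<lambda>y. \<Sum>s\<in>insert x S. c s * br s y) = (\<lambda>y. 1 * (\<Sum>s\<in>S. c s * br s y) + c x * br x y)"
    using insert.hyps by (simp add: add.commute)
  have e2: "(\<lambda>y. \<Sum>s\<in>insert x S. c s * T (br s) y) = (\<lambda>y. 1 * (\<Sum>s\<in>S. c s * T (br s) y) + c x * T (br x) y)"
    using insert.hyps by (simp add: add.commute)
  show ?case unfolding e e2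
    using V_lin[OF IH(1) br_in_V[OF xG], where a=1 and b="c x"] G_endo_lin[OF T IH(1) br_in_V[OF xG], of 1 "c x"] IH(2)
    by simp
qed

lemma T_eval:
  assumes T: "G_endo VV T" and TB: "\<forall>g\<in>GL2. T (br g) = (\<lambda>x. \<Sum>l\<in>L. br (m2_mult g (M l)) x)"
    and f: "f \<in> VV" and S: "finite S" "S \<subseteq> GL2" and fS: "\<forall>y. f y = (\<Sum>s\<in>S. f (minv s) * br s y)"
  shows "T f y = (\<Sum>s\<in>S. f (minv s) * (\<Sum>l\<in>L. br (m2_mult s (M l)) y))"
proof -
  have "f = (\<lambda>y. \<Sum>s\<in>S. f (minv s) * br s y)" using fS by blast
  then have "T f = (\<lambda>y. \<Sum>s\<in>S. f (minv s) * T (br s) y)" using T_sum[OF T S] by metis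
  then show ?thesis using TB S(2) by (auto intro!: sum.cong)
qed

end


context vf
begin

definition minval :: "'F m2 \<Rightarrow> int" where "minval g = Min (v ` (m2_entries g - {0}))"
definition PP :: "'F m2 \<Rightarrow> int" where "PP g = v (m2_det g) - 2 * minval g"
definition alldv :: "int \<Rightarrow> 'F m2 \<Rightarrow> bool" where "alldv n g \<longleftrightarrow> (\<forall>x\<in>m2_entries g. dv n x)"

lemma entries_fin: "finite (m2_entries g)" by (cases g) auto

lemma GL2_nz: "g \<in> GL2 \<Longrightarrow> m2_entries g - {0} \<noteq> {}"
  by (cases g) (auto simp: GL2_def)

lemma minval_le: "g \<in> GL2 \<Longrightarrow> x \<in> m2_entries g \<Longrightarrow> x \<noteq> 0 \<Longrightarrow> minval g \<le> v x"
  unfolding minval_def using entries_fin by (intro Min_le) auto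

lemma minval_att: "g \<in> GL2 \<Longrightarrow> \<exists>x\<in>m2_entries g. x \<noteq> 0 \<and> v x = minval g"
proof -
  assume g: "g \<in> GL2"
  have "minval g \<in> v ` (m2_entries g - {0})" unfolding minval_def
    using entries_fin GL2_nz[OF g] by (intro Min_in) auto
  then show ?thesis by auto
qed

lemma alldv_minval: "g \<in> GL2 \<Longrightarrow> alldv (minval g) g"
  unfolding alldv_def dv_def using minval_le by auto

lemma minval_ge: "g \<in> GL2 \<Longrightarrow> alldv n g \<Longrightarrow> n \<le> minval g"
  using minval_att unfolding alldv_def dv_def by fastforce

lemma minval_eqI: "g \<in> GL2 \<Longrightarrow> alldv n g \<Longrightarrow> x \<in> m2_entries g \<Longrightarrow> x \<noteq> 0 \<Longrightarrow> v x = n \<Longrightarrow> minval g = n"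
  using minval_ge minval_le by fastforce

lemma alldv_M2: "alldv n (M2 a b c d) \<longleftrightarrow> dv n a \<and> dv n b \<and> dv n c \<and> dv n d"
  by (simp add: alldv_def)

lemma alldv_mult: "alldv n g \<Longrightarrow> alldv 0 k \<Longrightarrow> alldv n (m2_mult g k)"
  by (cases g; cases k) (simp add: alldv_M2 dv_add dv_mult0')

lemma Kmax_alldv: "k \<in> Kmax v \<Longrightarrow> alldv 0 k"
  by (cases k) (simp add: alldv_M2 Kmax_M2)

lemma minval_K: "g \<in> GL2 \<Longrightarrow> k \<in> Kmax v \<Longrightarrow> minval (m2_mult g k) = minval g"
proof -
  assume g: "g \<in> GL2" and k: "k \<in> Kmax v"
  have gk: "m2_mult g k \<in> GL2" using g k Kmax_GL2 GL2_mult by blast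
  have 1: "minval g \<le> minval (m2_mult g k)"
    using minval_ge[OF gk] alldv_mult[OF alldv_minval[OF g] Kmax_alldv[OF k]] by blast
  have "g = m2_mult (m2_mult g k) (minv k)" using cancel_r1 GL2_det Kmax_GL2 k by metis
  then have "alldv (minval (m2_mult g k)) g"
    using alldv_mult[OF alldv_minval[OF gk] Kmax_alldv[OF Kmax_minv[OF k]]] by metis
  then have 2: "minval (m2_mult g k) \<le> minval g" using minval_ge[OF g] by blast
  show ?thesis using 1 2 by simp
qed

lemma dv_powi: "dv n (vpi powi n)" by (simp add: dv_def vpowi)

lemma minval_smult: "g \<in> GL2 \<Longrightarrow> minval (m2_smult (vpi powi n) g) = n + minval g"
proof -
  assume g: "g \<in> GL2"
  have sg: "m2_smult (vpi powi n) g \<in> GL2" using g by (simp add: GL2_def det_smult)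
  obtain x where x: "x \<in> m2_entries g" "x \<noteq> 0" "v x = minval g" using minval_att[OF g] by blast
  have al: "alldv (n + minval g) (m2_smult (vpi powi n) g)"
    using alldv_minval[OF g] by (cases g) (simp add: alldv_M2 dv_mult dv_powi)
  have "vpi powi n * x \<in> m2_entries (m2_smult (vpi powi n) g)" using x(1) by (cases g) auto
  moreover have "v (vpi powi n * x) = n + minval g" using x by (simp add: vmult vpowi)
  ultimately show ?thesis using minval_eqI[OF sg al] x(2) by simp
qed

lemma PP_K: "g \<in> GL2 \<Longrightarrow> k \<in> Kmax v \<Longrightarrow> PP (m2_mult g k) = PP g"
  unfolding PP_def using minval_K
  by (simp add: m2_det_mult vmult GL2_det Kmax_def)

lemma PP_smult: "g \<in> GL2 \<Longrightarrow> PP (m2_smult (vpi powi n) g) = PP g"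
proof -
  assume g: "g \<in> GL2"
  have "v (m2_det (m2_smult (vpi powi n) g)) = 2*n + v (m2_det g)"
  proof -
    have "v ((vpi powi n)^2) = 2*n" using vpow[OF powi_nz, of n 2] vpowi by simp
    moreover have "v ((vpi powi n)^2 * m2_det g) = v ((vpi powi n)^2) + v (m2_det g)"
      by (rule vmult) (simp_all add: GL2_det[OF g])
    ultimately show ?thesis unfolding det_smult by simp
  qed
  then show ?thesis unfolding PP_def using minval_smult[OF g] by simp
qed

lemma PP_ZK: "g \<in> GL2 \<Longrightarrow> k \<in> ZK \<Longrightarrow> PP (m2_mult g k) = PP g"
proof -
  assume g: "g \<in> GL2" and "k \<in> ZK"
  then obtain n k0 where k: "k = m2_smult (vpi powi n) k0" "k0 \<in> Kmax v" unfolding ZK_def by blast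
  have "m2_mult g k0 \<in> GL2" using g k Kmax_GL2 GL2_mult by blast
  then show ?thesis using k PP_smult PP_K g by (simp add: smult_mult_right)
qed

abbreviation "bt \<equiv> beta_mat vpi"

lemma bt_mult: "m2_mult (M2 a b c d) bt = M2 (b*vpi) a (d*vpi) c"
  by (simp add: beta_mat_def)

lemma bt_GL2: "bt \<in> GL2" by (simp add: beta_mat_def GL2_def)

lemma minval_bt: "g \<in> GL2 \<Longrightarrow> (minval (m2_mult g bt) = minval g \<or> minval (m2_mult g bt) = minval g + 1)
   \<and> (minval (m2_mult g bt) = minval g + 1 \<longrightarrow> (\<forall>a b c d. g = M2 a b c d \<longrightarrow> dv (minval g + 1) a \<and> dv (minval g + 1) c))"
proof (cases g)
  case (M2 a b c d)
  assume g: "g \<in> GL2"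
  let ?m = "minval g"
  have gb: "m2_mult g bt \<in> GL2" using g bt_GL2 GL2_mult by blast
  have al: "dv ?m a" "dv ?m b" "dv ?m c" "dv ?m d" using alldv_minval[OF g] M2 by (auto simp: alldv_M2)
  have gbt: "m2_mult g bt = M2 (b*vpi) a (d*vpi) c" using M2 bt_mult by simp
  have "alldv ?m (m2_mult g bt)" unfolding gbt alldv_M2 using al
    by (auto intro: dv_mono[OF dv_mult[OF _ dv_vpi]])
  then have ge: "?m \<le> minval (m2_mult g bt)" using minval_ge[OF gb] by blast
  obtain x where x: "x \<in> m2_entries g" "x \<noteq> 0" "v x = ?m" using minval_att[OF g] by blast
  have le: "minval (m2_mult g bt) \<le> ?m + 1"
  proof -
    have "x = a \<or> x = b \<or> x = c \<or> x = d" using x M2 by auto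
    then show ?thesis
    proof (elim disjE)
      assume "x = a" then show ?thesis using minval_le[OF gb, of a] x M2 bt_mult by simp
    next
      assume "x = c" then show ?thesis using minval_le[OF gb, of c] x M2 bt_mult by simp
    next
      assume "x = b" then show ?thesis using minval_le[OF gb, of "b*vpi"] x M2 bt_mult by (simp add: vmult vvpi)
    next
      assume "x = d" then show ?thesis using minval_le[OF gb, of "d*vpi"] x M2 bt_mult by (simp add: vmult vvpi)
    qed
  qed
  have low: "dv (?m + 1) a \<and> dv (?m + 1) c" if "minval (m2_mult g bt) = ?m + 1"
    using alldv_minval[OF gb] that M2 by (simp add: bt_mult alldv_M2)
  show ?thesis using ge le low M2 by auto
qed

lemma vdet_bt: "g \<in> GL2 \<Longrightarrow> v (m2_det (m2_mult g bt)) = v (m2_det g) + 1"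
  using GL2_det[of g] by (simp add: m2_det_mult beta_mat_def vmult vvpi)

lemma PP_bt: "g \<in> GL2 \<Longrightarrow> PP (m2_mult g bt) = PP g + 1 \<or> PP (m2_mult g bt) = PP g - 1"
  using minval_bt vdet_bt unfolding PP_def by fastforce

lemma PP_bt_low: "g \<in> GL2 \<Longrightarrow> g = M2 a b c d \<Longrightarrow> PP (m2_mult g bt) \<le> PP g \<Longrightarrow> dv (minval g + 1) a \<and> dv (minval g + 1) c"
proof -
  assume g: "g \<in> GL2" "g = M2 a b c d" "PP (m2_mult g bt) \<le> PP g"
  then have "minval (m2_mult g bt) = minval g + 1" using minval_bt[OF g(1)] vdet_bt[OF g(1)] unfolding PP_def by auto
  then show ?thesis using minval_bt[OF g(1)] g(2) by blast
qed

lemma PP_nonneg: "g \<in> GL2 \<Longrightarrow> 0 \<le> PP g"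
proof (cases g)
  case (M2 a b c d)
  assume g: "g \<in> GL2"
  let ?m = "minval g"
  have al: "dv ?m a" "dv ?m b" "dv ?m c" "dv ?m d" using alldv_minval[OF g] M2 by (auto simp: alldv_M2)
  have "dv (?m + ?m) (a*d - b*c)" using al by (intro dv_diff dv_mult)
  then show ?thesis using g M2 unfolding PP_def dv_def by (auto simp: GL2_def)
qed

lemma PP_one: "PP one2 = 0"
proof -
  have G: "M2 1 0 0 1 \<in> GL2" by (simp add: GL2_def)
  have "minval one2 = 0" using minval_eqI[OF one2_GL2, of 0 1] G by (simp add: one2_def alldv_M2)
  then show ?thesis by (simp add: PP_def)
qed

lemma PP_IZ: "h \<in> IZ v vpi \<Longrightarrow> PP h = 0"
  using PP_ZK[OF one2_GL2 IZ_ZK] PP_one by simp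

lemma G1: "h \<in> IZ v vpi \<Longrightarrow> \<exists>k\<in>IZ v vpi. m2_mult h bt = m2_mult bt k"
proof -
  assume "h \<in> IZ v vpi"
  then obtain n h0 where h: "h = m2_smult (vpi powi n) h0" "h0 \<in> Iwahori v" unfolding IZ_def by blast
  obtain a b c d where h0: "h0 = M2 a b c d" by (cases h0)
  have hh: "dv 0 a" "dv 0 b" "dv 1 c" "dv 0 d" "a*d-b*c \<noteq> 0" "v (a*d-b*c) = 0" using h(2) h0 by (auto simp: Iw_M2)
  let ?k = "M2 d (c/vpi) (vpi*b) a"
  have det: "d*a - c/vpi*(vpi*b) = a*d-b*c" by (simp add: field_simps)
  have kI: "?k \<in> Iwahori v" unfolding Iw_M2 det using hh dv_div_vpi[of 0 c]
    by (auto intro: dv_mult[of 1 vpi 0 b, simplified])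
  have "m2_mult h0 bt = m2_mult bt ?k" unfolding h0 by (simp add: beta_mat_def mult.commute)
  then have "m2_mult h bt = m2_mult bt (m2_smult (vpi powi n) ?k)"
    unfolding h by (simp only: smult_mult_left smult_mult_right)
  moreover have "m2_smult (vpi powi n) ?k \<in> IZ v vpi" using kI unfolding IZ_def by blast
  ultimately show ?thesis by blast
qed

lemma IZ_det0: "h \<in> IZ v vpi \<Longrightarrow> v (m2_det h) = 0 \<Longrightarrow> h \<in> Iwahori v"
proof -
  assume h: "h \<in> IZ v vpi" "v (m2_det h) = 0"
  then obtain n h0 where hh: "h = m2_smult (vpi powi n) h0" "h0 \<in> Iwahori v" unfolding IZ_def by blast
  have d: "m2_det h0 \<noteq> 0" "v (m2_det h0) = 0" using hh(2) by (auto simp: Iwahori_def Kmax_def)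
  have "v ((vpi powi n)^2) = 2*n" using vpow[OF powi_nz, of n 2] vpowi by simp
  then have "v (m2_det h) = 2*n" unfolding hh det_smult using d vmult[of "(vpi powi n)^2" "m2_det h0"] by simp
  then have "n = 0" using h(2) by simp
  then show ?thesis using hh by simp
qed

lemma PPb: assumes G: "G \<in> GL2" and k: "k \<in> ZK" and l1: "PP (m2_mult G bt) \<le> PP G"
  and l2: "PP (m2_mult (m2_mult G k) bt) \<le> PP G"
  shows "k \<in> IZ v vpi"
proof -
  obtain n k0 where k0: "k = m2_smult (vpi powi n) k0" "k0 \<in> Kmax v" using k unfolding ZK_def by blast
  obtain a b c d where Gm: "G = M2 a b c d" by (cases G)
  obtain p q s t where km: "k0 = M2 p q s t" by (cases k0)
  let ?m = "minval G"
  have Gk0: "m2_mult G k0 \<in> GL2" using G k0 Kmax_GL2 GL2_mult by blast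
  have "m2_mult (m2_mult G k) bt = m2_smult (vpi powi n) (m2_mult (m2_mult G k0) bt)"
    unfolding k0 by (simp add: smult_mult_left smult_mult_right)
  then have "PP (m2_mult (m2_mult G k0) bt) \<le> PP (m2_mult G k0)"
    using l2 PP_smult[OF GL2_mult[OF Gk0 bt_GL2]] PP_K[OF G k0(2)] by simp
  moreover have "m2_mult G k0 = M2 (a*p + b*s) (a*q + b*t) (c*p + d*s) (c*q + d*t)" using Gm km by simp
  ultimately have c1: "dv (?m + 1) (a*p + b*s)" "dv (?m + 1) (c*p + d*s)"
    using PP_bt_low[OF Gk0] minval_K[OF G k0(2)] by auto
  have c2: "dv (?m + 1) a" "dv (?m + 1) c" using PP_bt_low[OF G Gm l1] by auto
  have kk: "dv 0 p" "dv 0 q" "dv 0 s" "dv 0 t" using k0(2) km by (auto simp: Kmax_M2)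
  have bs: "dv (?m + 1) (b*s)" using dv_diff[OF c1(1) dv_mult0'[OF c2(1) kk(1)]] by simp
  have ds: "dv (?m + 1) (d*s)" using dv_diff[OF c1(2) dv_mult0'[OF c2(2) kk(1)]] by simp
  obtain x where x: "x \<in> m2_entries G" "x \<noteq> 0" "v x = ?m" using minval_att[OF G] by blast
  have "x \<noteq> a" "x \<noteq> c" using c2 x by (auto simp: dv_def)
  then have xs: "dv (?m + 1) (x*s)" using x Gm bs ds by auto
  have "dv 1 s"
  proof (cases "s = 0")
    case False
    then have "?m + 1 \<le> v x + v s" using xs x vmult[of x s] by (auto simp: dv_def)
    then show ?thesis using x by (simp add: dv_def)
  qed simp
  then have "k0 \<in> Iwahori v" using k0(2) km by (simp add: Iwahori_def maxideal_dv)
  then show ?thesis using k0 unfolding IZ_def by blast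
qed

end


definition nn :: "'a::field \<Rightarrow> 'a \<Rightarrow> 'a m2" where "nn p l = M2 p l 0 1"
definition mm :: "'a::field \<Rightarrow> 'a \<Rightarrow> 'a m2" where "mm p l = M2 1 0 (p*l) p"
definition uw :: "'a::field \<Rightarrow> 'a m2" where "uw l = M2 l 1 1 0"

lemma teich_fin: "2 \<le> q \<Longrightarrow> finite (teich q :: 'a::field set)"
proof -
  assume q: "2 \<le> q"
  let ?p = "monom (1::'a) q - [:0,1:]"
  have c0: "coeff [:0,1:] q = (0::'a)" using q by (cases q) (auto simp: coeff_pCons split: nat.split)
  have "coeff ?p q = 1" using c0 by simp
  then have "?p \<noteq> 0" by (metis coeff_0 zero_neq_one)
  then have "finite {x. poly ?p x = 0}" by (rule poly_roots_finite)
  moreover have "{x. poly ?p x = 0} = teich q" by (auto simp: teich_def poly_monom)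
  ultimately show ?thesis by simp
qed

lemma teich_0: "1 \<le> q \<Longrightarrow> (0::'a::field) \<in> teich q"
  by (simp add: teich_def)

lemma uw_mult: "m2_mult (m2_mult (m2_mult g (beta_mat p)) (M2 1 l 0 1)) w_mat = m2_mult g (mm p l)"
  by (simp add: m2_mult_assoc beta_mat_def w_mat_def mm_def)

lemma mm_eq: "mm p l = m2_mult (beta_mat p) (uw l)"
  by (simp add: mm_def beta_mat_def uw_def)

context vf
begin

lemma teich_unit: "2 \<le> q \<Longrightarrow> l \<in> teich q \<Longrightarrow> l \<noteq> 0 \<Longrightarrow> v l = 0"
proof -
  assume q: "2 \<le> q" and l: "l \<in> teich q" "l \<noteq> 0"
  have "v (l^q) = v l" using l by (simp add: teich_def)
  then have "int q * v l = v l" using vpow[OF l(2)] by simp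
  then have "(int q - 1) * v l = 0" by (simp add: algebra_simps)
  then show ?thesis using q by simp
qed

lemma teich_dv0: "2 \<le> q \<Longrightarrow> l \<in> teich q \<Longrightarrow> dv 0 l"
proof -
  assume q: "2 \<le> q" and l: "l \<in> teich q"
  show ?thesis
  proof (cases "l = 0")
    case False then show ?thesis using teich_unit[OF q l False] by (simp add: dv_def)
  qed simp
qed

lemma uw_K: "dv 0 l \<Longrightarrow> uw l \<in> Kmax v"
  by (simp add: uw_def Kmax_M2)

lemma nn_GL2: "nn vpi l \<in> GL2" by (simp add: nn_def GL2_def)
lemma mm_GL2: "mm vpi l \<in> GL2" by (simp add: mm_def GL2_def)

lemma nn_bt_ZK: "dv 0 l \<Longrightarrow> m2_mult (nn vpi l) bt \<in> ZK"
proof -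
  assume l: "dv 0 l"
  have "m2_mult (nn vpi l) bt = m2_smult (vpi powi 1) (uw l)"
    by (simp add: nn_def beta_mat_def uw_def mult.commute)
  then show ?thesis using uw_K[OF l] unfolding ZK_def by blast
qed

lemma nn_not: "v l = 0 \<Longrightarrow> l \<noteq> 0 \<Longrightarrow> m2_mult (minv (nn vpi 0)) (nn vpi l) \<notin> IZ v vpi"
proof
  assume l: "v l = 0" "l \<noteq> 0" and h: "m2_mult (minv (nn vpi 0)) (nn vpi l) \<in> IZ v vpi"
  have e: "m2_mult (minv (nn vpi 0)) (nn vpi l) = M2 1 (l/vpi) 0 1" by (simp add: nn_def)
  have "M2 1 (l/vpi) 0 1 \<in> Iwahori v" using IZ_det0[of "M2 1 (l/vpi) 0 1"] h e by simp
  then have "dv 0 (l/vpi)" by (simp add: Iw_M2)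
  then show False using l by (simp add: dv_def vdiv vvpi)
qed

lemma mm_not: "v l = 0 \<Longrightarrow> l \<noteq> 0 \<Longrightarrow> m2_mult (minv (mm vpi 0)) (mm vpi l) \<notin> IZ v vpi"
proof
  assume l: "v l = 0" "l \<noteq> 0" and h: "m2_mult (minv (mm vpi 0)) (mm vpi l) \<in> IZ v vpi"
  have e: "m2_mult (minv (mm vpi 0)) (mm vpi l) = M2 1 0 l 1" by (simp add: mm_def)
  have "M2 1 0 l 1 \<in> Iwahori v" using IZ_det0[of "M2 1 0 l 1"] h e by simp
  then have "dv 1 l" by (simp add: Iw_M2)
  then show False using l by (simp add: dv_def)
qed

lemma btbt: "m2_mult bt bt = m2_smult (vpi powi 1) one2"
  by (simp add: beta_mat_def one2_def)

lemma PP_btbt: "g \<in> GL2 \<Longrightarrow> PP (m2_mult (m2_mult g bt) bt) = PP g"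
proof -
  assume g: "g \<in> GL2"
  have "m2_mult (m2_mult g bt) bt = m2_mult g (m2_smult (vpi powi 1) one2)" by (simp only: m2_mult_assoc btbt)
  then show ?thesis using PP_ZK[OF g IZ_ZK[OF scal_IZ[of 1]]] by metis
qed

end


context rep
begin

lemma step_common:
  assumes T: "G_endo VV T" and TB: "\<forall>g\<in>GL2. T (br g) = (\<lambda>x. \<Sum>l\<in>L. br (m2_mult g (M l)) x)"
    and L: "finite L" "l0 \<in> L" and MG: "\<forall>l\<in>L. M l \<in> GL2"
    and Mnot: "\<forall>l\<in>L. l \<noteq> l0 \<longrightarrow> m2_mult (minv (M l0)) (M l) \<notin> IZ'"
    and f: "f \<in> VV" and Tf: "T f = (\<lambda>_. 0)" and S: "finite S" "S \<subseteq> GL2"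
    and fS: "\<forall>y. f y = (\<Sum>s\<in>S. f (minv s) * br s y)"
    and s1: "s1 \<in> S" "f (minv s1) \<noteq> 0"
  shows "\<exists>s\<in>S. s \<noteq> s1 \<and> f (minv s) \<noteq> 0 \<and> (\<exists>l\<in>L. \<exists>h\<in>IZ'. m2_mult s (M l) = m2_mult (m2_mult s1 (M l0)) h)"
proof -
  have s1G: "s1 \<in> GL2" using s1 S by auto
  define g where "g = m2_mult s1 (M l0)"
  have gG: "g \<in> GL2" unfolding g_def using s1G MG L GL2_mult by blast
  define y where "y = minv g"
  have E: "T f y = (\<Sum>s\<in>S. f (minv s) * (\<Sum>l\<in>L. br (m2_mult s (M l)) y))" by (rule T_eval[OF T TB f S fS])
  have inner1: "(\<Sum>l\<in>L. br (m2_mult s1 (M l)) y) = 1"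
  proof -
    have a: "br (m2_mult s1 (M l)) y = 0" if l: "l \<in> L - {l0}" for l
    proof (rule br_val0)
      have "m2_mult y (m2_mult s1 (M l)) = m2_mult (minv (M l0)) (M l)"
        unfolding y_def g_def using s1G MG L by (simp add: minv_mult GL2_det m2_mult_assoc cancel_l1)
      then show "m2_mult y (m2_mult s1 (M l)) \<notin> IZ'" using Mnot l by auto
    qed
    have b: "br g y = 1" unfolding y_def using br_self[OF gG] .
    have "(\<Sum>l\<in>L. br (m2_mult s1 (M l)) y) = br (m2_mult s1 (M l0)) y + (\<Sum>l\<in>L - {l0}. br (m2_mult s1 (M l)) y)"
      using L by (simp add: sum.remove)
    then show ?thesis using a b unfolding g_def by simp
  qed
  define X where "X = (\<Sum>s\<in>S - {s1}. f (minv s) * (\<Sum>l\<in>L. br (m2_mult s (M l)) y))"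
  have "(\<Sum>s\<in>S. f (minv s) * (\<Sum>l\<in>L. br (m2_mult s (M l)) y)) = f (minv s1) + X"
    unfolding X_def using S s1 inner1 by (simp add: sum.remove)
  then have "f (minv s1) + X = 0" using E Tf by simp
  then have "X \<noteq> 0" using s1(2) by auto
  then obtain s where s: "s \<in> S - {s1}" "f (minv s) * (\<Sum>l\<in>L. br (m2_mult s (M l)) y) \<noteq> 0"
    unfolding X_def by (rule sum.not_neutral_contains_not_neutral)
  then have fs: "f (minv s) \<noteq> 0" "(\<Sum>l\<in>L. br (m2_mult s (M l)) y) \<noteq> 0" by auto
  obtain l where l: "l \<in> L" "br (m2_mult s (M l)) y \<noteq> 0" using fs(2) by (rule sum.not_neutral_contains_not_neutral)
  then have h: "m2_mult y (m2_mult s (M l)) \<in> IZ'" by (simp add: bracket_def split: if_splits)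
  have "m2_mult s (M l) = m2_mult g (m2_mult y (m2_mult s (M l)))"
    unfolding y_def using cancel_l2 GL2_det gG by metis
  then show ?thesis using s fs l h unfolding g_def by blast
qed

lemma step1:
  assumes q: "2 \<le> q" and T: "G_endo VV T" and TB: "\<forall>g\<in>GL2. T (br g) = (\<lambda>x. \<Sum>l\<in>teich q. br (m2_mult g (nn vpi l)) x)"
    and f: "f \<in> VV" and Tf: "T f = (\<lambda>_. 0)" and S: "finite S" "S \<subseteq> GL2"
    and fS: "\<forall>y. f y = (\<Sum>s\<in>S. f (minv s) * br s y)"
    and s1: "s1 \<in> S" "f (minv s1) \<noteq> 0"
  shows "\<exists>s\<in>S. s \<noteq> s1 \<and> f (minv s) \<noteq> 0 \<and> (\<exists>k\<in>ZK. s = m2_mult s1 k)"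
proof -
  have L: "finite (teich q)" "0 \<in> teich q" using q teich_fin by (auto intro: teich_0)
  have Mnot: "\<forall>l\<in>teich q. l \<noteq> 0 \<longrightarrow> m2_mult (minv (nn vpi 0)) (nn vpi l) \<notin> IZ'"
    using nn_not teich_unit[OF q] by blast
  obtain s l h where s: "s \<in> S" "s \<noteq> s1" "f (minv s) \<noteq> 0" "l \<in> teich q" "h \<in> IZ'"
    "m2_mult s (nn vpi l) = m2_mult (m2_mult s1 (nn vpi 0)) h"
    using step_common[OF T TB L(1) L(2) _ Mnot f Tf S fS s1] nn_GL2 by blast
  have sG: "s \<in> GL2" using s S by auto
  define A where "A = m2_mult (nn vpi l) bt"
  define B where "B = m2_mult (nn vpi 0) bt"
  have AB: "A \<in> ZK" "B \<in> ZK" unfolding A_def B_def using nn_bt_ZK teich_dv0[OF q s(4)] by auto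
  obtain k' where k': "k' \<in> IZ'" "m2_mult h bt = m2_mult bt k'" using G1[OF s(5)] by blast
  have "m2_mult s A = m2_mult (m2_mult s (nn vpi l)) bt" unfolding A_def by (simp add: m2_mult_assoc)
  also have "\<dots> = m2_mult (m2_mult s1 (nn vpi 0)) (m2_mult h bt)" using s(6) by (simp add: m2_mult_assoc)
  also have "\<dots> = m2_mult s1 (m2_mult B k')" unfolding k'(2) B_def by (simp add: m2_mult_assoc)
  finally have sA: "m2_mult s A = m2_mult s1 (m2_mult B k')" .
  have "s = m2_mult (m2_mult s A) (minv A)" using cancel_r1 GL2_det ZK_GL2 AB by metis
  then have "s = m2_mult s1 (m2_mult (m2_mult B k') (minv A))" unfolding sA by (simp add: m2_mult_assoc)
  moreover have "m2_mult (m2_mult B k') (minv A) \<in> ZK" using AB k' ZK_mult ZK_minv IZ_ZK by blast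
  ultimately show ?thesis using s by blast
qed

lemma step2:
  assumes q: "2 \<le> q" and T: "G_endo VV T" and TB: "\<forall>g\<in>GL2. T (br g) = (\<lambda>x. \<Sum>l\<in>teich q. br (m2_mult g (mm vpi l)) x)"
    and f: "f \<in> VV" and Tf: "T f = (\<lambda>_. 0)" and S: "finite S" "S \<subseteq> GL2"
    and fS: "\<forall>y. f y = (\<Sum>s\<in>S. f (minv s) * br s y)"
    and s1: "s1 \<in> S" "f (minv s1) \<noteq> 0"
  shows "\<exists>s\<in>S. s \<noteq> s1 \<and> f (minv s) \<noteq> 0 \<and> (\<exists>k\<in>ZK. m2_mult s bt = m2_mult (m2_mult s1 bt) k)"
proof -
  have L: "finite (teich q)" "0 \<in> teich q" using q teich_fin by (auto intro: teich_0)
  have Mnot: "\<forall>l\<in>teich q. l \<noteq> 0 \<longrightarrow> m2_mult (minv (mm vpi 0)) (mm vpi l) \<notin> IZ'"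
    using mm_not teich_unit[OF q] by blast
  obtain s l h where s: "s \<in> S" "s \<noteq> s1" "f (minv s) \<noteq> 0" "l \<in> teich q" "h \<in> IZ'"
    "m2_mult s (mm vpi l) = m2_mult (m2_mult s1 (mm vpi 0)) h"
    using step_common[OF T TB L(1) L(2) _ Mnot f Tf S fS s1] mm_GL2 by blast
  have U: "uw l \<in> ZK" "uw 0 \<in> ZK" using uw_K teich_dv0[OF q s(4)] Kmax_ZK by auto
  have "m2_mult (m2_mult s bt) (uw l) = m2_mult (m2_mult s1 bt) (m2_mult (uw 0) h)"
    using s(6) unfolding mm_eq by (simp add: m2_mult_assoc)
  then have "m2_mult s bt = m2_mult (m2_mult (m2_mult s1 bt) (m2_mult (uw 0) h)) (minv (uw l))"
    using cancel_r1 GL2_det ZK_GL2 U by metis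
  then have "m2_mult s bt = m2_mult (m2_mult s1 bt) (m2_mult (m2_mult (uw 0) h) (minv (uw l)))"
    by (simp add: m2_mult_assoc)
  moreover have "m2_mult (m2_mult (uw 0) h) (minv (uw l)) \<in> ZK" using U s(5) ZK_mult ZK_minv IZ_ZK by blast
  ultimately show ?thesis using s by blast
qed

lemma nIZ2: "s1 \<in> GL2 \<Longrightarrow> \<not> sameE s1 s \<Longrightarrow> \<not> (s1 \<in> IZ' \<and> s \<in> IZ')"
proof
  assume s1: "s1 \<in> GL2" and n: "\<not> sameE s1 s" and b: "s1 \<in> IZ' \<and> s \<in> IZ'"
  have "s = m2_mult s1 (m2_mult (minv s1) s)" using cancel_l2 GL2_det s1 by metis
  moreover have "m2_mult (minv s1) s \<in> IZ'" using b IZ_mult IZ_minv by blast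
  ultimately show False using n unfolding sameE_def by blast
qed

lemma outpot:
  assumes s1G: "s1 \<in> GL2" and k: "k \<in> ZK" and ne: "\<not> sameE s1 (m2_mult s1 k)"
  shows "\<exists>s'\<in>{s1, m2_mult s1 k}. s' \<notin> IZ' \<and> PP s1 + 1 \<le> PP (m2_mult s' bt)"
proof -
  define s where "s = m2_mult s1 k"
  have sG: "s \<in> GL2" unfolding s_def using s1G k ZK_GL2 GL2_mult by blast
  have Ps: "PP s = PP s1" unfolding s_def using PP_ZK[OF s1G k] .
  have nIZ: "\<not> (s1 \<in> IZ' \<and> s \<in> IZ')" using nIZ2[OF s1G ne] unfolding s_def .
  have hi: "PP s1 + 1 \<le> PP (m2_mult s1 bt) \<or> PP s1 + 1 \<le> PP (m2_mult s bt)"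
  proof (rule ccontr)
    assume "\<not> ?thesis"
    then have "PP (m2_mult s1 bt) \<le> PP s1" "PP (m2_mult (m2_mult s1 k) bt) \<le> PP s1"
      using PP_bt[OF s1G] PP_bt[OF sG] Ps unfolding s_def by auto
    then have "k \<in> IZ'" using PPb[OF s1G k] by blast
    then show False using ne unfolding sameE_def by blast
  qed
  show ?thesis
  proof (cases "PP s1 = 0")
    case True
    have "PP s1 + 1 \<le> PP (m2_mult s1 bt)" using PP_bt[OF s1G] PP_nonneg[OF GL2_mult[OF s1G bt_GL2]] True by auto
    moreover have "PP s1 + 1 \<le> PP (m2_mult s bt)" using PP_bt[OF sG] PP_nonneg[OF GL2_mult[OF sG bt_GL2]] True Ps by auto
    ultimately show ?thesis using nIZ unfolding s_def by blast
  next
    case False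
    then have "s1 \<notin> IZ'" "s \<notin> IZ'" using PP_IZ Ps by auto
    then show ?thesis using hi unfolding s_def by blast
  qed
qed

lemma smult_cancel: "c \<noteq> 0 \<Longrightarrow> m2_smult c x = m2_smult c (y::'F m2) \<Longrightarrow> x = y"
  by (cases x; cases y) (auto simp: mult_left_cancel)

lemma inpot:
  assumes s1G: "s1 \<in> GL2" and sG: "s \<in> GL2" and k: "k \<in> ZK"
    and sk: "m2_mult s bt = m2_mult (m2_mult s1 bt) k" and ne: "\<not> sameE s1 s"
  shows "\<exists>s'\<in>{s1, s}. s' \<notin> IZ' \<and> PP (m2_mult s1 bt) + 1 \<le> PP s'"
proof -
  define G where "G = m2_mult s1 bt"
  have GG: "G \<in> GL2" unfolding G_def using s1G bt_GL2 GL2_mult by blast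
  have PG1: "PP (m2_mult G bt) = PP s1" unfolding G_def using PP_btbt[OF s1G] .
  have PG2: "PP (m2_mult (m2_mult G k) bt) = PP s" using PP_btbt[OF sG] sk unfolding G_def by simp
  have PG3: "PP (m2_mult s bt) = PP G" using sk PP_ZK[OF GG k] unfolding G_def by simp
  have nIZ: "\<not> (s1 \<in> IZ' \<and> s \<in> IZ')" using nIZ2[OF s1G ne] .
  have r1: "PP s1 = PP G + 1 \<or> PP s1 = PP G - 1" using PP_bt[OF s1G] unfolding G_def by auto
  have r2: "PP s = PP G + 1 \<or> PP s = PP G - 1" using PP_bt[OF sG] PG3 by auto
  have hi: "PP G + 1 \<le> PP s1 \<or> PP G + 1 \<le> PP s"
  proof (rule ccontr)
    assume "\<not> ?thesis"
    then have "PP (m2_mult G bt) \<le> PP G" "PP (m2_mult (m2_mult G k) bt) \<le> PP G"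
      using PG1 PG2 r1 r2 by auto
    then have kI: "k \<in> IZ'" using PPb[OF GG k] by blast
    obtain k' where k': "k' \<in> IZ'" "m2_mult k bt = m2_mult bt k'" using G1[OF kI] by blast
    have "m2_mult s (m2_mult bt bt) = m2_mult s1 (m2_mult (m2_mult bt bt) k')"
    proof -
      have "m2_mult s (m2_mult bt bt) = m2_mult (m2_mult s bt) bt" by (simp add: m2_mult_assoc)
      also have "\<dots> = m2_mult s1 (m2_mult bt (m2_mult k bt))" unfolding sk by (simp add: m2_mult_assoc)
      also have "\<dots> = m2_mult s1 (m2_mult (m2_mult bt bt) k')" unfolding k'(2) by (simp add: m2_mult_assoc)
      finally show ?thesis .
    qed
    then have "m2_smult (vpi powi 1) s = m2_smult (vpi powi 1) (m2_mult s1 k')"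
      unfolding btbt by (simp add: smult_mult_left smult_mult_right)
    then have "s = m2_mult s1 k'" using smult_cancel[OF powi_nz] by blast
    then show False using ne k' unfolding sameE_def by blast
  qed
  show ?thesis
  proof (cases "PP G = 0")
    case True
    have "PP G + 1 \<le> PP s1" "PP G + 1 \<le> PP s" using r1 r2 True PP_nonneg[OF s1G] PP_nonneg[OF sG] by auto
    then show ?thesis using nIZ unfolding G_def by blast
  next
    case False
    then have "0 < PP G" using PP_nonneg[OF GG] by simp
    then show ?thesis using hi PP_IZ unfolding G_def by fastforce
  qed
qed

end


context rep
begin

lemma supp:
  assumes f: "f \<in> VV" and fS: "\<forall>y. f y = (\<Sum>s\<in>S. f (minv s) * br s y)" and t: "t \<in> GL2" "f (minv t) \<noteq> 0"
  shows "\<exists>s\<in>S. f (minv s) \<noteq> 0 \<and> sameE t s"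
proof -
  have "(\<Sum>s\<in>S. f (minv s) * br s (minv t)) \<noteq> 0" using fS t by metis
  then obtain s where s: "s \<in> S" "f (minv s) * br s (minv t) \<noteq> 0" by (rule sum.not_neutral_contains_not_neutral)
  then have "m2_mult (minv t) s \<in> IZ'" by (auto simp: bracket_def split: if_splits)
  moreover have "s = m2_mult t (m2_mult (minv t) s)" using cancel_l2 GL2_det t by metis
  ultimately show ?thesis using s unfolding sameE_def by auto
qed

lemma PP_sameE: "t \<in> GL2 \<Longrightarrow> sameE t s \<Longrightarrow> PP s = PP t \<and> PP (m2_mult s bt) = PP (m2_mult t bt)"
proof -
  assume t: "t \<in> GL2" and "sameE t s"
  then obtain h where h: "h \<in> IZ'" "s = m2_mult t h" unfolding sameE_def by blast
  obtain k' where k': "k' \<in> IZ'" "m2_mult h bt = m2_mult bt k'" using G1[OF h(1)] by blast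
  have "m2_mult s bt = m2_mult (m2_mult t bt) k'" using h(2) k'(2) by (simp add: m2_mult_assoc)
  then show ?thesis using PP_ZK[OF t IZ_ZK[OF h(1)]] PP_ZK[OF GL2_mult[OF t bt_GL2] IZ_ZK[OF k'(1)]] h(2) by simp
qed

lemma minv_minv: "x \<in> GL2 \<Longrightarrow> minv (minv x) = x"
  using minv_unique[OF minv_left] GL2_det GL2_minv by metis

lemma main_contra:
  assumes q: "2 \<le> q"
    and T1: "G_endo VV T1" "\<forall>g\<in>GL2. T1 (br g) = (\<lambda>x. \<Sum>l\<in>teich q. br (m2_mult g (nn vpi l)) x)"
    and T2: "G_endo VV T2" "\<forall>g\<in>GL2. T2 (br g) = (\<lambda>x. \<Sum>l\<in>teich q. br (m2_mult g (mm vpi l)) x)"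
    and f1: "f1 \<in> VV" "T1 f1 = (\<lambda>_. 0)" and f2: "f2 \<in> VV" "T2 f2 = (\<lambda>_. 0)"
    and sum: "br one2 = (\<lambda>x. f1 x + f2 x)"
  shows False
proof -
  obtain S1 where S1: "finite S1" "S1 \<subseteq> GL2" "\<forall>s\<in>S1. \<forall>t\<in>S1. sameE s t \<longrightarrow> s = t"
      "\<forall>y. f1 y = (\<Sum>s\<in>S1. f1 (minv s) * br s y)" using decomp[OF f1(1)] by blast
  obtain S2 where S2: "finite S2" "S2 \<subseteq> GL2" "\<forall>s\<in>S2. \<forall>t\<in>S2. sameE s t \<longrightarrow> s = t"
      "\<forall>y. f2 y = (\<Sum>s\<in>S2. f2 (minv s) * br s y)" using decomp[OF f2(1)] by blast
  define A1 where "A1 = {s\<in>S1. f1 (minv s) \<noteq> 0}"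
  define A2 where "A2 = {s\<in>S2. f2 (minv s) \<noteq> 0}"
  have sumx: "br one2 x = f1 x + f2 x" for x using sum by metis
  have br0: "br one2 (minv s) = 0" if "s \<in> GL2" "s \<notin> IZ'" for s
  proof -
    have "minv s \<notin> IZ'" using that IZ_minv minv_minv by metis
    then show ?thesis by (intro br_val0) simp
  qed
  have tr1: "f2 (minv s) \<noteq> 0" if "s \<in> GL2" "s \<notin> IZ'" "f1 (minv s) \<noteq> 0" for s
    using br0[OF that(1,2)] sumx[of "minv s"] that(3) by auto
  have tr2: "f1 (minv s) \<noteq> 0" if "s \<in> GL2" "s \<notin> IZ'" "f2 (minv s) \<noteq> 0" for s
    using br0[OF that(1,2)] sumx[of "minv s"] that(3) by auto
  have AG: "A1 \<subseteq> GL2" "A2 \<subseteq> GL2" using S1(2) S2(2) by (auto simp: A1_def A2_def)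
  have ne: "A1 \<union> A2 \<noteq> {}"
  proof
    assume e: "A1 \<union> A2 = {}"
    have z1: "\<forall>s\<in>S1. f1 (minv s) = 0" using e unfolding A1_def by blast
    have e1: "f1 one2 = (\<Sum>s\<in>S1. f1 (minv s) * br s one2)" using S1(4) by blast
    have a1: "f1 one2 = 0" unfolding e1 using z1 by simp
    have z2: "\<forall>s\<in>S2. f2 (minv s) = 0" using e unfolding A2_def by blast
    have e2: "f2 one2 = (\<Sum>s\<in>S2. f2 (minv s) * br s one2)" using S2(4) by blast
    have a2: "f2 one2 = 0" unfolding e2 using z2 by simp
    have a3: "br one2 one2 = 1" using br_val[OF one2_GL2, of one2] one2_IZ chi_one by simp
    show False using sumx[of one2] a1 a2 a3 by simp
  qed
  have fin: "finite (A1 \<union> A2)" using S1(1) S2(1) by (auto simp: A1_def A2_def)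
  define Q where "Q s = max (PP s) (PP (m2_mult s bt))" for s
  define M where "M = Max (Q ` (A1 \<union> A2))"
  have Mge: "Q t \<le> M" if "t \<in> A1 \<union> A2" for t using fin that by (simp add: M_def)
  have "M \<in> Q ` (A1 \<union> A2)" unfolding M_def using fin ne by (intro Max_in) auto
  then obtain s0 where s0: "s0 \<in> A1 \<union> A2" "Q s0 = M" by blast
  have from1: "\<exists>u\<in>A2. PP s + 2 \<le> PP u" if s: "s \<in> A1" for s
  proof -
    have sS: "s \<in> S1" "f1 (minv s) \<noteq> 0" "s \<in> GL2" using s AG by (auto simp: A1_def)
    obtain s' k where s': "s' \<in> S1" "s' \<noteq> s" "f1 (minv s') \<noteq> 0" "k \<in> ZK" "s' = m2_mult s k"
      using step1[OF q T1(1) T1(2) f1(1) f1(2) S1(1) S1(2) S1(4) sS(1) sS(2)] by blast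
    have nse: "\<not> sameE s (m2_mult s k)"
    proof
      assume "sameE s (m2_mult s k)"
      then have "s = s'" using S1(3) s'(1,5) sS(1) by blast
      then show False using s'(2) by simp
    qed
    obtain a where a: "a \<in> {s, m2_mult s k}" "a \<notin> IZ'" "PP s + 1 \<le> PP (m2_mult a bt)"
      using outpot[OF sS(3) s'(4) nse] by blast
    have aA: "a \<in> S1" "f1 (minv a) \<noteq> 0" "a \<in> GL2" using a sS s' S1(2) by auto
    then have "f2 (minv a) \<noteq> 0" using tr1 a by blast
    then obtain t where t: "t \<in> S2" "f2 (minv t) \<noteq> 0" "sameE a t" using supp[OF f2(1) S2(4) aA(3)] by blast
    have Pt: "PP (m2_mult t bt) = PP (m2_mult a bt)" using PP_sameE[OF aA(3) t(3)] by simp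
    have tG: "t \<in> GL2" using t(1) S2(2) by auto
    obtain u k2 where u: "u \<in> S2" "u \<noteq> t" "f2 (minv u) \<noteq> 0" "k2 \<in> ZK" "m2_mult u bt = m2_mult (m2_mult t bt) k2"
      using step2[OF q T2(1) T2(2) f2(1) f2(2) S2(1) S2(2) S2(4) t(1) t(2)] by blast
    have uG: "u \<in> GL2" using u(1) S2(2) by auto
    have nse2: "\<not> sameE t u"
    proof
      assume "sameE t u"
      then have "t = u" using S2(3) u(1) t(1) by blast
      then show False using u(2) by simp
    qed
    obtain b where b: "b \<in> {t, u}" "b \<notin> IZ'" "PP (m2_mult t bt) + 1 \<le> PP b"
      using inpot[OF tG uG u(4) u(5) nse2] by blast
    have bA2: "b \<in> A2" using b t u by (auto simp: A2_def)
    have "PP s + 2 \<le> PP b" using b(3) Pt a(3) by linarith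
    then show ?thesis using bA2 by blast
  qed
  have from2: "\<exists>u\<in>A1. PP (m2_mult s bt) + 2 \<le> PP (m2_mult u bt)" if s: "s \<in> A2" for s
  proof -
    have sS: "s \<in> S2" "f2 (minv s) \<noteq> 0" "s \<in> GL2" using s AG by (auto simp: A2_def)
    obtain u k2 where u: "u \<in> S2" "u \<noteq> s" "f2 (minv u) \<noteq> 0" "k2 \<in> ZK" "m2_mult u bt = m2_mult (m2_mult s bt) k2"
      using step2[OF q T2(1) T2(2) f2(1) f2(2) S2(1) S2(2) S2(4) sS(1) sS(2)] by blast
    have uG: "u \<in> GL2" using u(1) S2(2) by auto
    have nse2: "\<not> sameE s u"
    proof
      assume "sameE s u"
      then have "s = u" using S2(3) u(1) sS(1) by blast
      then show False using u(2) by simp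
    qed
    obtain b where b: "b \<in> {s, u}" "b \<notin> IZ'" "PP (m2_mult s bt) + 1 \<le> PP b"
      using inpot[OF sS(3) uG u(4) u(5) nse2] by blast
    have bA: "b \<in> S2" "f2 (minv b) \<noteq> 0" "b \<in> GL2" using b sS u S2(2) by auto
    then have "f1 (minv b) \<noteq> 0" using tr2 b by blast
    then obtain t where t: "t \<in> S1" "f1 (minv t) \<noteq> 0" "sameE b t" using supp[OF f1(1) S1(4) bA(3)] by blast
    have Pt: "PP t = PP b" using PP_sameE[OF bA(3) t(3)] by simp
    have tG: "t \<in> GL2" using t(1) S1(2) by auto
    obtain s' k where s': "s' \<in> S1" "s' \<noteq> t" "f1 (minv s') \<noteq> 0" "k \<in> ZK" "s' = m2_mult t k"
      using step1[OF q T1(1) T1(2) f1(1) f1(2) S1(1) S1(2) S1(4) t(1) t(2)] by blast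
    have nse: "\<not> sameE t (m2_mult t k)"
    proof
      assume "sameE t (m2_mult t k)"
      then have "t = s'" using S1(3) s'(1,5) t(1) by blast
      then show False using s'(2) by simp
    qed
    obtain a where a: "a \<in> {t, m2_mult t k}" "a \<notin> IZ'" "PP t + 1 \<le> PP (m2_mult a bt)"
      using outpot[OF tG s'(4) nse] by blast
    have aA1: "a \<in> A1" using a t s' by (auto simp: A1_def)
    have "PP (m2_mult s bt) + 2 \<le> PP (m2_mult a bt)" using a(3) Pt b(3) by linarith
    then show ?thesis using aA1 by blast
  qed
  show False
  proof (cases "s0 \<in> A1")
    case True
    obtain u where u: "u \<in> A2" "PP s0 + 2 \<le> PP u" using from1[OF True] by blast
    have s0G: "s0 \<in> GL2" using AG s0(1) by blast
    have "Q s0 \<le> PP s0 + 1" using PP_bt[OF s0G] by (auto simp: Q_def)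
    moreover have "PP u \<le> Q u" by (simp add: Q_def)
    ultimately show False using Mge[of u] u s0 by auto
  next
    case False
    then have s0A: "s0 \<in> A2" using s0 by auto
    obtain u where u: "u \<in> A1" "PP (m2_mult s0 bt) + 2 \<le> PP (m2_mult u bt)" using from2[OF s0A] by blast
    have s0G: "s0 \<in> GL2" using AG s0(1) by blast
    have "Q s0 \<le> PP (m2_mult s0 bt) + 1" using PP_bt[OF s0G] by (auto simp: Q_def)
    moreover have "PP (m2_mult u bt) \<le> Q u" by (simp add: Q_def)
    ultimately show False using Mge[of u] u s0 by auto
  qed
qed

end

theorem lemma3p5:
  fixes v :: "'F::field \<Rightarrow> int" and vpi :: 'F and q p r :: nat
    and \<iota> :: "'F \<Rightarrow> 'k::field"
    and T1 T2 :: "('F m2 \<Rightarrow> 'k) \<Rightarrow> ('F m2 \<Rightarrow> 'k)"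
  assumes F: "padic_field v q"
    and unif: "vpi \<noteq> 0" "v vpi = 1"
    and p: "prime p" "CHAR('k) = p"
    and k_closed: "\<forall>P :: 'k poly. degree P \<noteq> 0 \<longrightarrow> (\<exists>x. poly P x = 0)"
    and k_alg: "\<forall>x :: 'k. \<exists>n>0. x ^ (p ^ n) = x"
    and red: "residue_map v \<iota>"
    and r: "0 < r" "r < q - 1"
    and T1: "G_endo (ind_space v vpi \<iota> r) T1"
      "\<forall>g\<in>GL2. T1 (bracket v vpi \<iota> r g) =
         (\<lambda>x. \<Sum>l\<in>teich q. bracket v vpi \<iota> r (m2_mult g (M2 vpi l 0 1)) x)"
    and T2: "G_endo (ind_space v vpi \<iota> r) T2"
      "\<forall>g\<in>GL2. T2 (bracket v vpi \<iota> r g) =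
         (\<lambda>x. \<Sum>l\<in>teich q. bracket v vpi \<iota> r
                 (m2_mult (m2_mult (m2_mult g (beta_mat vpi)) (M2 1 l 0 1)) w_mat) x)"
  shows "\<exists>f \<in> ind_space v vpi \<iota> r.
           \<not> (\<exists>f1 \<in> ind_space v vpi \<iota> r. \<exists>f2 \<in> ind_space v vpi \<iota> r.
                 T1 f1 = (\<lambda>_. 0) \<and> T2 f2 = (\<lambda>_. 0) \<and> f = (\<lambda>x. f1 x + f2 x))"
proof -
  have dval: "discrete_valuation v" using F by (simp add: padic_field_def)
  interpret R: rep v vpi \<iota> r
    by unfold_locales (use dval unif red in auto)
  have q: "2 \<le> q" using r by simp
  have T1': "\<forall>g\<in>GL2. T1 (R.br g) = (\<lambda>x. \<Sum>l\<in>teich q. R.br (m2_mult g (nn vpi l)) x)"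
    using T1(2) by (simp add: nn_def)
  have T2': "\<forall>g\<in>GL2. T2 (R.br g) = (\<lambda>x. \<Sum>l\<in>teich q. R.br (m2_mult g (mm vpi l)) x)"
    using T2(2) by (simp add: uw_mult)
  show ?thesis
  proof (intro bexI[of _ "R.br one2"] notI)
    show "R.br one2 \<in> R.VV" using R.br_in_V[OF one2_GL2] .
  next
    assume "\<exists>f1\<in>R.VV. \<exists>f2\<in>R.VV. T1 f1 = (\<lambda>_. 0) \<and> T2 f2 = (\<lambda>_. 0) \<and> R.br one2 = (\<lambda>x. f1 x + f2 x)"
    then obtain f1 f2 where f: "f1 \<in> R.VV" "f2 \<in> R.VV" "T1 f1 = (\<lambda>_. 0)" "T2 f2 = (\<lambda>_. 0)" "R.br one2 = (\<lambda>x. f1 x + f2 x)"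
      by blast
    show False using R.main_contra[OF q T1(1) T1' T2(1) T2' f(1) f(3) f(2) f(4) f(5)] .
  qed
qed

end
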